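(* If $\Gamma$ is a neat subgroup of $\Phi$, then $\Gamma_X$ acts trivially on $X$, i.e. every element of $\Gamma_X$ fixes $X$ pointwise ($\Gamma'_X=\Gamma_X$).
   Context: $\mathbb K$ is a totally real number field with real embeddings $\lambda_1,\dots,\lambda_r$; $\underline V$ a $\mathbb K$-vector space with nondegenerate symmetric bilinear form of signature $(p,q)$ at $\lambda_1$ and positive definite at all other embeddings; $L\subset\underline V$ an integral lattice; $\Phi$ the group of $\mathbb K$-rational isometries of determinant one preserving $L$. An element $g$ is neat if the subgroup of $\mathbb C^*$ generated by its eigenvalues is torsion free; a subgroup is neat if all its elements are. $\underline X\subset\underline V$ is a $\mathbb K$-subspace such that $(\,,\,)$ restricted to the completion $X$ of $\underline X$ at $\lambda_1$ is positive definite (and $\underline X$ is nondegenerate at every place); $\Gamma_X$ is the stabilizer of $X$ in $\Gamma$ and $\Gamma'_X$ the subgroup acting trivially on $X$. *)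

theory Defs
  imports "HOL-Computational_Algebra.Polynomial" "Jordan_Normal_Form.Char_Poly"
begin

section \<open>Totally real number fields (embedded in the reals via the distinguished embedding)\<close>

definition subfield_real :: "real set \<Rightarrow> bool" where
  "subfield_real K \<longleftrightarrow> 0 \<in> K \<and> 1 \<in> K \<and>
     (\<forall>x\<in>K. \<forall>y\<in>K. x + y \<in> K \<and> x - y \<in> K \<and> x * y \<in> K) \<and>
     (\<forall>x\<in>K. x \<noteq> 0 \<longrightarrow> inverse x \<in> K)"

definition number_field_real :: "real set \<Rightarrow> bool" where
  "number_field_real K \<longleftrightarrow> subfield_real K \<and>
     (\<exists>(d::nat) (b::nat \<Rightarrow> real). (\<forall>i<d. b i \<in> K) \<and>
        (\<forall>x\<in>K. \<exists>c. (\<forall>i<d. c i \<in> \<rat>) \<and> x = (\<Sum>i<d. c i * b i)))"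

definition field_embedding :: "real set \<Rightarrow> (real \<Rightarrow> complex) \<Rightarrow> bool" where
  "field_embedding K \<sigma> \<longleftrightarrow> \<sigma> 1 = 1 \<and>
     (\<forall>x\<in>K. \<forall>y\<in>K. \<sigma> (x + y) = \<sigma> x + \<sigma> y \<and> \<sigma> (x * y) = \<sigma> x * \<sigma> y)"

definition totally_real :: "real set \<Rightarrow> bool" where
  "totally_real K \<longleftrightarrow> number_field_real K \<and>
     (\<forall>\<sigma>. field_embedding K \<sigma> \<longrightarrow> (\<forall>x\<in>K. \<sigma> x \<in> \<real>))"

text \<open>Real embeddings K \<rightarrow> R; the distinguished one (lambda_1) is the inclusion.\<close>
definition real_embedding :: "real set \<Rightarrow> (real \<Rightarrow> real) \<Rightarrow> bool" where
  "real_embedding K \<sigma> \<longleftrightarrow> field_embedding K (\<lambda>x. complex_of_real (\<sigma> x))"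

definition ring_of_integers :: "real set \<Rightarrow> real set" where
  "ring_of_integers K = {x \<in> K. algebraic_int x}"

definition Kvecs :: "real set \<Rightarrow> nat \<Rightarrow> real vec set" where
  "Kvecs K n = {v \<in> carrier_vec n. \<forall>i<n. v $ i \<in> K}"

definition bil :: "real mat \<Rightarrow> real vec \<Rightarrow> real vec \<Rightarrow> real" where
  "bil B x y = x \<bullet> (B *\<^sub>v y)"

definition lincomb_vec :: "nat \<Rightarrow> nat \<Rightarrow> (nat \<Rightarrow> real) \<Rightarrow> (nat \<Rightarrow> real vec) \<Rightarrow> real vec" where
  "lincomb_vec n m c xs = vec n (\<lambda>i. \<Sum>j<m. c j * (xs j $ i))"

definition span_with :: "real set \<Rightarrow> nat \<Rightarrow> real vec set \<Rightarrow> real vec set" where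
  "span_with S n A = {lincomb_vec n m c xs | m c xs.
      (\<forall>j<m. c j \<in> S) \<and> (\<forall>j<m. xs j \<in> A)}"

definition admissible_form :: "real set \<Rightarrow> nat \<Rightarrow> real mat \<Rightarrow> bool" where
  "admissible_form K n B \<longleftrightarrow>
     B \<in> carrier_mat n n \<and> transpose_mat B = B \<and> (\<forall>i<n. \<forall>j<n. B $$ (i,j) \<in> K) \<and>
     \<comment> \<open>nondegenerate (at lambda_1, hence signature (p,q) with p+q=n)\<close>
     (\<forall>x\<in>Kvecs K n. (\<forall>y\<in>Kvecs K n. bil B x y = 0) \<longrightarrow> x = 0\<^sub>v n) \<and>
     \<comment> \<open>positive definite at all other real embeddings\<close>
     (\<forall>\<sigma>. real_embedding K \<sigma> \<and> (\<exists>x\<in>K. \<sigma> x \<noteq> x) \<longrightarrow>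
        (\<forall>x\<in>carrier_vec n. x \<noteq> 0\<^sub>v n \<longrightarrow> bil (map_mat \<sigma> B) x x > 0))"

definition integral_lattice :: "real set \<Rightarrow> nat \<Rightarrow> real mat \<Rightarrow> real vec set \<Rightarrow> bool" where
  "integral_lattice K n B L \<longleftrightarrow>
     (\<exists>(m::nat) gs. (\<forall>j<m. gs j \<in> Kvecs K n) \<and>
        L = span_with (ring_of_integers K) n (gs ` {..<m}) \<and>
        Kvecs K n = span_with K n (gs ` {..<m})) \<and>
     (\<forall>x\<in>L. \<forall>y\<in>L. bil B x y \<in> ring_of_integers K)"

definition Phi :: "real set \<Rightarrow> nat \<Rightarrow> real mat \<Rightarrow> real vec set \<Rightarrow> real mat set" where
  "Phi K n B L = {g \<in> carrier_mat n n. (\<forall>i<n. \<forall>j<n. g $$ (i,j) \<in> K) \<and>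
       transpose_mat g * B * g = B \<and> det g = 1 \<and> (\<lambda>v. g *\<^sub>v v) ` L = L}"

definition is_subgroup_of :: "nat \<Rightarrow> real mat set \<Rightarrow> real mat set \<Rightarrow> bool" where
  "is_subgroup_of n G H \<longleftrightarrow> G \<subseteq> H \<and> 1\<^sub>m n \<in> G \<and>
     (\<forall>g\<in>G. \<forall>h\<in>G. g * h \<in> G) \<and> (\<forall>g\<in>G. \<exists>h\<in>G. g * h = 1\<^sub>m n)"

definition mult_subgroup_gen :: "complex set \<Rightarrow> complex set" where
  "mult_subgroup_gen S = {prod_list (map (\<lambda>(s,k). s powi k) ks) | ks.
      \<forall>p\<in>set ks. fst p \<in> S}"

definition torsion_free_set :: "complex set \<Rightarrow> bool" where
  "torsion_free_set G \<longleftrightarrow> (\<forall>z\<in>G. \<forall>m::nat. m > 0 \<and> z ^ m = 1 \<longrightarrow> z = 1)"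

definition neat_elem :: "real mat \<Rightarrow> bool" where
  "neat_elem g \<longleftrightarrow>
     torsion_free_set (mult_subgroup_gen {k. eigenvalue (map_mat complex_of_real g) k})"

definition neat :: "real mat set \<Rightarrow> bool" where
  "neat G \<longleftrightarrow> (\<forall>g\<in>G. neat_elem g)"

definition K_subspace :: "real set \<Rightarrow> nat \<Rightarrow> real vec set \<Rightarrow> bool" where
  "K_subspace K n X \<longleftrightarrow> X \<subseteq> Kvecs K n \<and> 0\<^sub>v n \<in> X \<and>
     (\<forall>x\<in>X. \<forall>y\<in>X. x + y \<in> X) \<and> (\<forall>c\<in>K. \<forall>x\<in>X. c \<cdot>\<^sub>v x \<in> X)"

text \<open>Completion at lambda_1: the real span.\<close>
definition completion :: "nat \<Rightarrow> real vec set \<Rightarrow> real vec set" where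
  "completion n X = span_with UNIV n X"

definition stab :: "real mat set \<Rightarrow> real vec set \<Rightarrow> real mat set" where
  "stab G Y = {g \<in> G. (\<lambda>v. g *\<^sub>v v) ` Y = Y}"

definition pointwise_stab :: "real mat set \<Rightarrow> real vec set \<Rightarrow> real mat set" where
  "pointwise_stab G Y = {g \<in> G. \<forall>v\<in>Y. g *\<^sub>v v = v}"

end

theory Submission
  imports Defs "HOL-Library.Function_Algebras"
begin


lemma smult_zero_left_vec[simp]: "(v::'a::comm_ring_1 vec) \<in> carrier_vec n \<Longrightarrow> 0 \<cdot>\<^sub>v v = 0\<^sub>v n"
  by (rule eq_vecI) auto
lemma smult_zero_vec_right[simp]: "(c::'a::comm_ring_1) \<cdot>\<^sub>v 0\<^sub>v n = 0\<^sub>v n"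
  by (rule eq_vecI) auto
lemma mult_mat_zero_vec[simp]: "(A::'a::comm_ring_1 mat) \<in> carrier_mat n m \<Longrightarrow> A *\<^sub>v 0\<^sub>v m = 0\<^sub>v n"
  by (rule eq_vecI) (auto simp: row_def)

lemma mult_mat_vec_smult: "(A::'a::comm_ring_1 mat) \<in> carrier_mat n m \<Longrightarrow> v \<in> carrier_vec m \<Longrightarrow> A *\<^sub>v (k \<cdot>\<^sub>v v) = k \<cdot>\<^sub>v (A *\<^sub>v v)"
  by (rule eq_vecI) (auto simp: scalar_prod_smult_right)

fun evl :: "'a::comm_ring_1 mat \<Rightarrow> 'a list \<Rightarrow> 'a vec \<Rightarrow> 'a vec" where
  "evl A [] w = 0\<^sub>v (dim_vec w)"
| "evl A (a # cs) w = a \<cdot>\<^sub>v w + A *\<^sub>v evl A cs w"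

definition ev :: "'a::comm_ring_1 mat \<Rightarrow> 'a poly \<Rightarrow> 'a vec \<Rightarrow> 'a vec" where
  "ev A p w = evl A (coeffs p) w"

context
  fixes A :: "'a::comm_ring_1 mat" and N :: nat and w :: "'a vec"
  assumes A: "A \<in> carrier_mat N N" and w: "w \<in> carrier_vec N"
begin

lemma evl_carrier: "evl A cs w \<in> carrier_vec N"
  by (induction cs) (use A w in auto)

lemma ev_carrier[simp]: "ev A p w \<in> carrier_vec N"
  unfolding ev_def by (rule evl_carrier)

lemma ev_dim[simp]: "dim_vec (ev A p w) = N"
  using ev_carrier by auto

lemma ev_0[simp]: "ev A 0 w = 0\<^sub>v N"
  unfolding ev_def using w by simp

lemma ev_pCons: "ev A (pCons a p) w = a \<cdot>\<^sub>v w + A *\<^sub>v ev A p w"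
proof (cases "p = 0 \<and> a = 0")
  case True
  then show ?thesis using A w by (auto simp: ev_def)
next
  case False
  then have "coeffs (pCons a p) = a # coeffs p"
    by (auto simp: cCons_def)
  then show ?thesis unfolding ev_def by simp
qed

lemma ev_add: "ev A (p + q) w = ev A p w + ev A q w"
proof (induction p arbitrary: q rule: pCons_induct)
  case 0
  then show ?case using A w by simp
next
  case (pCons a p)
  obtain b q' where q: "q = pCons b q'" by (cases q) auto
  have c1: "ev A p w \<in> carrier_vec N" "ev A q' w \<in> carrier_vec N" by auto
  have "ev A (pCons a p + q) w = (a + b) \<cdot>\<^sub>v w + A *\<^sub>v (ev A p w + ev A q' w)"
    by (simp add: q ev_pCons pCons.IH)
  also have "\<dots> = (a \<cdot>\<^sub>v w + A *\<^sub>v ev A p w) + (b \<cdot>\<^sub>v w + A *\<^sub>v ev A q' w)"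
    using A w c1 by (simp add: mult_add_distrib_mat_vec add_smult_distrib_vec)
      (rule eq_vecI, auto simp: algebra_simps)
  finally show ?case by (simp add: q ev_pCons)
qed

lemma ev_smult: "ev A (Polynomial.smult c p) w = c \<cdot>\<^sub>v ev A p w"
proof (induction p rule: pCons_induct)
  case 0
  then show ?case using w by simp
next
  case (pCons a p)
  have c1: "ev A p w \<in> carrier_vec N" by auto
  have e: "A *\<^sub>v (c \<cdot>\<^sub>v ev A p w) = c \<cdot>\<^sub>v (A *\<^sub>v ev A p w)"
    using A c1 by (simp add: mult_mat_vec_smult)
  show ?case using A w c1
    by (simp add: ev_pCons pCons.IH e smult_add_distrib_vec[of _ N] smult_smult_assoc)
qed

lemma ev_const: "ev A [:c:] w = c \<cdot>\<^sub>v w"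
  using A w by (simp add: ev_pCons)

lemma ev_one: "ev A 1 w = w"
  using ev_const[of 1] w by (simp add: one_pCons)

end

lemma ev_mult:
  assumes A: "A \<in> carrier_mat N N" and w: "w \<in> carrier_vec N"
  shows "ev A (p * q) w = ev A p (ev A q w)"
proof (induction p rule: pCons_induct)
  case 0
  then show ?case using A w by simp
next
  case (pCons a p)
  have c1: "ev A q w \<in> carrier_vec N" using A w by simp
  have "ev A (pCons a p * q) w = ev A (Polynomial.smult a q + pCons 0 (p * q)) w"
    by simp
  also have "\<dots> = a \<cdot>\<^sub>v ev A q w + A *\<^sub>v ev A p (ev A q w)"
    using A w c1 by (simp add: ev_add ev_smult ev_pCons pCons.IH)
  also have "\<dots> = ev A (pCons a p) (ev A q w)"
    using A c1 by (simp add: ev_pCons)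
  finally show ?case .
qed

lemma ev_monom:
  assumes A: "A \<in> carrier_mat N N" and w: "w \<in> carrier_vec N"
  shows "ev A (monom 1 k) w = ((\<lambda>v. A *\<^sub>v v) ^^ k) w"
proof (induction k)
  case 0
  then show ?case using A w by (simp add: ev_const monom_0)
next
  case (Suc k)
  have c: "ev A (monom 1 k) w \<in> carrier_vec N" using A w by simp
  have "monom (1::'a) (Suc k) = pCons 0 (monom 1 k)" by (simp add: monom_Suc)
  then show ?case using A w c by (simp add: ev_pCons Suc)
qed

lemma ev_in_subspace:
  assumes A: "A \<in> carrier_mat N N" and WN: "W \<subseteq> carrier_vec N"
    and cl: "\<And>v. v \<in> W \<Longrightarrow> A *\<^sub>v v \<in> W"
    and add: "\<And>u v. u \<in> W \<Longrightarrow> v \<in> W \<Longrightarrow> u + v \<in> W"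
    and sc: "\<And>c v. v \<in> W \<Longrightarrow> c \<cdot>\<^sub>v v \<in> W"
    and wW: "w \<in> W"
  shows "ev A p w \<in> W"
proof (induction p rule: pCons_induct)
  case 0
  have "0 \<cdot>\<^sub>v w \<in> W" by (rule sc[OF wW])
  moreover have "0 \<cdot>\<^sub>v w = 0\<^sub>v N" using wW WN by auto
  ultimately show ?case using A wW WN by auto
next
  case (pCons a p)
  have w: "w \<in> carrier_vec N" using wW WN by auto
  show ?case using pCons.IH by (simp add: ev_pCons[OF A w] add sc cl wW)
qed

lemma pp_eigen:
  fixes A :: "'a::field mat"
  assumes A: "A \<in> carrier_mat N N" and WN: "W \<subseteq> carrier_vec N"
    and cl: "\<And>v. v \<in> W \<Longrightarrow> A *\<^sub>v v \<in> W"
    and add: "\<And>u v. u \<in> W \<Longrightarrow> v \<in> W \<Longrightarrow> u + v \<in> W"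
    and sc: "\<And>c v. v \<in> W \<Longrightarrow> c \<cdot>\<^sub>v v \<in> W"
  shows "w \<in> W \<Longrightarrow> w \<noteq> 0\<^sub>v N \<Longrightarrow> ev A (\<Prod>\<rho>\<leftarrow>rs. [:-\<rho>, 1:]) w = 0\<^sub>v N \<Longrightarrow>
     \<exists>\<zeta>\<in>set rs. \<exists>v\<in>W. v \<noteq> 0\<^sub>v N \<and> A *\<^sub>v v = \<zeta> \<cdot>\<^sub>v v"
proof (induction rs arbitrary: w)
  case Nil
  have w: "w \<in> carrier_vec N" using Nil WN by auto
  then show ?case using Nil by (simp add: ev_one[OF A w])
next
  case (Cons r rs)
  have w: "w \<in> carrier_vec N" using Cons WN by auto
  define u where "u = ev A (\<Prod>\<rho>\<leftarrow>rs. [:-\<rho>, 1:]) w"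
  have uW: "u \<in> W" unfolding u_def by (rule ev_in_subspace[OF A WN cl add sc Cons.prems(1)])
  have u: "u \<in> carrier_vec N" using uW WN by auto
  show ?case
  proof (cases "u = 0\<^sub>v N")
    case True
    have "ev A (\<Prod>\<rho>\<leftarrow>rs. [:-\<rho>, 1:]) w = 0\<^sub>v N" using True u_def by simp
    from Cons.IH[OF Cons.prems(1,2) this] show ?thesis by auto
  next
    case False
    have "0\<^sub>v N = ev A ([:-r, 1:] * (\<Prod>\<rho>\<leftarrow>rs. [:-\<rho>, 1:])) w"
      using Cons.prems(3) by simp
    also have "\<dots> = ev A [:-r, 1:] u" unfolding u_def by (rule ev_mult[OF A w])
    also have "\<dots> = (-r) \<cdot>\<^sub>v u + A *\<^sub>v u"
      using A u by (simp add: ev_pCons ev_const)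
    finally have eq: "0\<^sub>v N = (-r) \<cdot>\<^sub>v u + A *\<^sub>v u" .
    have "A *\<^sub>v u = r \<cdot>\<^sub>v u"
    proof (rule eq_vecI)
      fix i assume i: "i < dim_vec (r \<cdot>\<^sub>v u)"
      have "(0\<^sub>v N) $ i = ((-r) \<cdot>\<^sub>v u + A *\<^sub>v u) $ i" using eq by simp
      then show "(A *\<^sub>v u) $ i = (r \<cdot>\<^sub>v u) $ i" using A u i by simp
    qed (use A u in auto)
    then show ?thesis using uW False by auto
  qed
qed


lemma alg_int_eigen:
  fixes Z :: "int mat" and v :: "complex vec"
  assumes Z: "Z \<in> carrier_mat N N" and v: "v \<in> carrier_vec N" and v0: "v \<noteq> 0\<^sub>v N"
    and eq: "map_mat of_int Z *\<^sub>v v = z \<cdot>\<^sub>v v"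
  shows "algebraic_int z"
proof -
  have Zc: "map_mat of_int Z \<in> carrier_mat N N" using Z by simp
  have "eigenvector (map_mat of_int Z) v z" unfolding eigenvector_def using Z v v0 eq by auto
  hence "eigenvalue (map_mat of_int Z) z" unfolding eigenvalue_def by blast
  hence "poly (char_poly (map_mat of_int Z)) z = 0" using eigenvalue_root_char_poly[OF Zc] by auto
  also have "char_poly (map_mat of_int Z) = map_poly of_int (char_poly Z)"
    by (rule of_int_hom.char_poly_hom[OF Z])
  finally have "poly (map_poly of_int (char_poly Z)) z = 0" .
  moreover have "lead_coeff (char_poly Z) = 1" using degree_monic_char_poly[OF Z] by simp
  ultimately show ?thesis by (auto simp: algebraic_int_altdef_ipoly)
qed

lemma alg_int_poly:
  fixes x :: complex
  assumes "algebraic_int x"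
  obtains p :: "int poly" where "lead_coeff p = 1" "poly (map_poly of_int p) x = 0" "degree p \<ge> 1"
proof -
  obtain p :: "int poly" where p: "poly (map_poly of_int p) x = 0" "lead_coeff p = 1"
    using assms by (auto simp: algebraic_int_altdef_ipoly)
  have "degree p \<noteq> 0"
  proof
    assume "degree p = 0"
    then have "p = [:1:]" using p(2) by (metis leading_coeff_0_iff monom_0 monom_eq_1_iff one_pCons pCons_0_0 degree_0_id zero_neq_one)
    then show False using p(1) by simp
  qed
  then show ?thesis using that p by auto
qed

lemma sum_shift_block: "sum f {(a::nat)..<a+s} = (\<Sum>j<s. f (a + j))"
  by (induction s) (auto simp: add.commute)

lemma sum_pairs: "(\<Sum>t<(r::nat)*s. f t) = (\<Sum>i<r. \<Sum>j<s. f (i*s+j))"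
proof -
  have "(\<Sum>t<r*s. f t) = (\<Sum>i<r. sum f {i*s..<i*s+s})"
    by (rule sum.nat_group[symmetric])
  also have "\<dots> = (\<Sum>i<r. \<Sum>j<s. f (i*s+j))"
    by (rule sum.cong[OF refl], rule sum_shift_block)
  finally show ?thesis .
qed

lemma pair_idx_less: "(i::nat) < r \<Longrightarrow> j < s \<Longrightarrow> i * s + j < r * s"
proof -
  assume i: "i < r" and j: "j < s"
  have "i * s + j < i * s + s" using j by simp
  also have "\<dots> = Suc i * s" by simp
  also have "\<dots> \<le> r * s" using i by (intro mult_right_mono) auto
  finally show ?thesis .
qed

definition cm :: "int poly \<Rightarrow> nat \<Rightarrow> nat \<Rightarrow> int" where
  "cm p i0 i = (if i0 + 1 < degree p then (if i = i0 + 1 then 1 else 0) else - coeff p i)"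

lemma companion_sum:
  fixes x :: complex
  assumes lc: "lead_coeff p = 1" and px: "poly (map_poly of_int p) x = 0" and i0: "i0 < degree p"
  shows "(\<Sum>i<degree p. of_int (cm p i0 i) * x ^ i) = x ^ (i0 + 1)"
proof (cases "i0 + 1 < degree p")
  case True
  then have "(\<Sum>i<degree p. of_int (cm p i0 i) * x ^ i) = (\<Sum>i<degree p. if i = i0 + 1 then x ^ i else 0)"
    by (intro sum.cong) (auto simp: cm_def)
  also have "\<dots> = x ^ (i0 + 1)" using True by (subst sum.delta) auto
  finally show ?thesis .
next
  case False
  then have r: "degree p = i0 + 1" using i0 by auto
  have "0 = poly (map_poly of_int p) x" using px by simp
  also have "\<dots> = (\<Sum>i\<le>degree p. of_int (coeff p i) * x ^ i)"
    by (simp add: poly_altdef degree_map_poly coeff_map_poly)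
  also have "\<dots> = (\<Sum>i<degree p. of_int (coeff p i) * x ^ i) + x ^ degree p"
    using lc by (simp add: lessThan_Suc_atMost[symmetric])
  finally have "x ^ degree p = - (\<Sum>i<degree p. of_int (coeff p i) * x ^ i)"
    by (simp add: eq_neg_iff_add_eq_0 add.commute)
  also have "\<dots> = (\<Sum>i<degree p. of_int (cm p i0 i) * x ^ i)"
    using False by (simp add: cm_def sum_negf)
  finally show ?thesis using r by simp
qed

lemma alg_int_add_mult:
  fixes x y :: complex
  assumes ax: "algebraic_int x" and ay: "algebraic_int y"
  shows "algebraic_int (x + y) \<and> algebraic_int (x * y)"
proof -
  obtain p where p: "lead_coeff p = 1" "poly (map_poly of_int p) x = 0" "degree p \<ge> 1"
    using alg_int_poly[OF ax] by blast
  obtain q where q: "lead_coeff q = 1" "poly (map_poly of_int q) y = 0" "degree q \<ge> 1"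
    using alg_int_poly[OF ay] by blast
  define r where "r = degree p"
  define s where "s = degree q"
  define N where "N = r * s"
  have s0: "s > 0" and r0: "r > 0" using p q by (auto simp: r_def s_def)
  define vv :: "complex vec" where "vv = vec N (\<lambda>t. x ^ (t div s) * y ^ (t mod s))"
  define XM :: "int mat" where "XM = mat N N (\<lambda>(t,t'). if t' mod s = t mod s then cm p (t div s) (t' div s) else 0)"
  define YM :: "int mat" where "YM = mat N N (\<lambda>(t,t'). if t' div s = t div s then cm q (t mod s) (t' mod s) else 0)"
  have vv: "vv \<in> carrier_vec N" unfolding vv_def by simp
  have XM: "XM \<in> carrier_mat N N" unfolding XM_def by simp
  have YM: "YM \<in> carrier_mat N N" unfolding YM_def by simp
  have N0: "N > 0" using r0 s0 by (simp add: N_def)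
  have vv0: "vv \<noteq> 0\<^sub>v N"
  proof
    assume "vv = 0\<^sub>v N"
    then have "vv $ 0 = 0" using N0 by simp
    then show False using N0 by (simp add: vv_def)
  qed
  have divmod: "(i * s + j) div s = i" "(i * s + j) mod s = j" if "j < s" for i j
    using that s0 by auto
  have X: "map_mat of_int XM *\<^sub>v vv = x \<cdot>\<^sub>v vv"
  proof (rule eq_vecI)
    fix t assume "t < dim_vec (x \<cdot>\<^sub>v vv)"
    then have t: "t < N" using vv by simp
    define i0 where "i0 = t div s"
    define j0 where "j0 = t mod s"
    have i0: "i0 < r" using t s0 unfolding i0_def N_def by (simp add: less_mult_imp_div_less)
    have j0: "j0 < s" using s0 unfolding j0_def by simp
    have "(map_mat of_int XM *\<^sub>v vv) $ t = (\<Sum>t'<N. of_int (XM $$ (t,t')) * vv $ t')"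
      using t XM vv by (simp add: scalar_prod_def row_def sum.atLeast0_lessThan_Suc lessThan_atLeast0)
    also have "\<dots> = (\<Sum>i<r. \<Sum>j<s. of_int (XM $$ (t,i*s+j)) * vv $ (i*s+j))"
      unfolding N_def by (rule sum_pairs)
    also have "\<dots> = (\<Sum>i<r. \<Sum>j<s. if j = j0 then of_int (cm p i0 i) * (x ^ i * y ^ j) else 0)"
    proof (intro sum.cong refl)
      fix i j assume i: "i \<in> {..<r}" and j: "j \<in> {..<s}"
      have ij: "i * s + j < N" using i j unfolding N_def
        by (intro pair_idx_less) auto
      show "of_int (XM $$ (t,i*s+j)) * vv $ (i*s+j) = (if j = j0 then of_int (cm p i0 i) * (x ^ i * y ^ j) else 0)"
        using ij t j by (simp add: XM_def vv_def divmod i0_def j0_def)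
    qed
    also have "\<dots> = (\<Sum>i<r. of_int (cm p i0 i) * x ^ i) * y ^ j0"
      using j0 by (simp add: sum_distrib_right mult.assoc)
    also have "\<dots> = x ^ (i0 + 1) * y ^ j0"
      using companion_sum[OF p(1,2)] i0 unfolding r_def by simp
    also have "\<dots> = (x \<cdot>\<^sub>v vv) $ t"
      using t by (simp add: vv_def i0_def j0_def)
    finally show "(map_mat of_int XM *\<^sub>v vv) $ t = (x \<cdot>\<^sub>v vv) $ t" .
  qed (use XM vv in auto)
  have Y: "map_mat of_int YM *\<^sub>v vv = y \<cdot>\<^sub>v vv"
  proof (rule eq_vecI)
    fix t assume "t < dim_vec (y \<cdot>\<^sub>v vv)"
    then have t: "t < N" using vv by simp
    define i0 where "i0 = t div s"
    define j0 where "j0 = t mod s"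
    have i0: "i0 < r" using t s0 unfolding i0_def N_def by (simp add: less_mult_imp_div_less)
    have j0: "j0 < s" using s0 unfolding j0_def by simp
    have "(map_mat of_int YM *\<^sub>v vv) $ t = (\<Sum>t'<N. of_int (YM $$ (t,t')) * vv $ t')"
      using t YM vv by (simp add: scalar_prod_def row_def sum.atLeast0_lessThan_Suc lessThan_atLeast0)
    also have "\<dots> = (\<Sum>i<r. \<Sum>j<s. of_int (YM $$ (t,i*s+j)) * vv $ (i*s+j))"
      unfolding N_def by (rule sum_pairs)
    also have "\<dots> = (\<Sum>i<r. if i = i0 then (\<Sum>j<s. of_int (cm q j0 j) * (x ^ i * y ^ j)) else 0)"
    proof (intro sum.cong refl)
      fix i assume i: "i \<in> {..<r}"
      show "(\<Sum>j<s. of_int (YM $$ (t,i*s+j)) * vv $ (i*s+j)) = (if i = i0 then (\<Sum>j<s. of_int (cm q j0 j) * (x ^ i * y ^ j)) else 0)"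
      proof -
        have "of_int (YM $$ (t,i*s+j)) * vv $ (i*s+j) = (if i = i0 then of_int (cm q j0 j) * (x ^ i * y ^ j) else 0)"
          if j: "j \<in> {..<s}" for j
        proof -
          have ij: "i * s + j < N" using i j unfolding N_def
            by (intro pair_idx_less) auto
          show ?thesis using ij t j by (simp add: YM_def vv_def divmod i0_def j0_def)
        qed
        then have "(\<Sum>j<s. of_int (YM $$ (t,i*s+j)) * vv $ (i*s+j)) = (\<Sum>j<s. if i = i0 then of_int (cm q j0 j) * (x ^ i * y ^ j) else 0)"
          by (intro sum.cong) auto
        then show ?thesis by simp
      qed
    qed
    also have "\<dots> = x ^ i0 * (\<Sum>j<s. of_int (cm q j0 j) * y ^ j)"
      using i0 by (simp add: sum_distrib_left mult.assoc mult.left_commute)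
    also have "\<dots> = x ^ i0 * y ^ (j0 + 1)"
      using companion_sum[OF q(1,2)] j0 unfolding s_def by simp
    also have "\<dots> = (y \<cdot>\<^sub>v vv) $ t"
      using t by (simp add: vv_def i0_def j0_def)
    finally show "(map_mat of_int YM *\<^sub>v vv) $ t = (y \<cdot>\<^sub>v vv) $ t" .
  qed (use YM vv in auto)
  have XMc: "map_mat of_int XM \<in> carrier_mat N N" using XM by simp
  have YMc: "map_mat of_int YM \<in> carrier_mat N N" using YM by simp
  have "map_mat of_int (XM + YM) *\<^sub>v vv = (x + y) \<cdot>\<^sub>v vv"
  proof -
    have "map_mat (of_int :: int \<Rightarrow> complex) (XM + YM) = map_mat of_int XM + map_mat of_int YM"
      using XM YM by (intro eq_matI) auto
    then show ?thesis using XMc YMc vv X Y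
      by (simp add: add_mult_distrib_mat_vec add_smult_distrib_vec)
  qed
  then have s1: "algebraic_int (x + y)"
    by (intro alg_int_eigen[OF _ vv vv0, of "XM + YM"]) (use XM YM in auto)
  have "map_mat of_int (XM * YM) *\<^sub>v vv = (x * y) \<cdot>\<^sub>v vv"
  proof -
    have "map_mat (of_int :: int \<Rightarrow> complex) (XM * YM) = map_mat of_int XM * map_mat of_int YM"
      by (rule of_int_hom.mat_hom_mult[OF XM YM])
    then have "map_mat of_int (XM * YM) *\<^sub>v vv = map_mat of_int XM *\<^sub>v (map_mat of_int YM *\<^sub>v vv)"
      using XMc YMc vv by (simp add: assoc_mult_mat_vec)
    also have "\<dots> = y \<cdot>\<^sub>v (x \<cdot>\<^sub>v vv)" using Y X XMc vv by (simp add: mult_mat_vec)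
    also have "\<dots> = (x * y) \<cdot>\<^sub>v vv" by (simp add: smult_smult_assoc mult.commute)
    finally show ?thesis .
  qed
  then have s2: "algebraic_int (x * y)"
    by (intro alg_int_eigen[OF _ vv vv0, of "XM * YM"]) (use XM YM in auto)
  show ?thesis using s1 s2 by blast
qed


lemma alg_int_add: "algebraic_int (x::complex) \<Longrightarrow> algebraic_int y \<Longrightarrow> algebraic_int (x + y)"
  using alg_int_add_mult by blast

lemma alg_int_mult: "algebraic_int (x::complex) \<Longrightarrow> algebraic_int y \<Longrightarrow> algebraic_int (x * y)"
  using alg_int_add_mult by blast

lemma coeff_linear_factor_mult:
  fixes a :: "'a::comm_ring_1"
  shows "coeff ([:-a, 1:] * P) i = - a * coeff P i + (case i of 0 \<Rightarrow> 0 | Suc k \<Rightarrow> coeff P k)"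
proof -
  have "[:1:] * P = P" by simp
  then have "[:-a, 1:] * P = Polynomial.smult (-a) P + pCons 0 P" by (simp only: mult_pCons_left)
  then show ?thesis by (simp add: coeff_pCons split: nat.splits)
qed

lemma alg_int_prod_coeffs:
  fixes rs :: "complex list"
  assumes "\<And>r. r \<in> set rs \<Longrightarrow> algebraic_int r"
  shows "algebraic_int (coeff (\<Prod>\<rho>\<leftarrow>rs. [:-\<rho>, 1:]) i)"
  using assms
proof (induction rs arbitrary: i)
  case Nil
  then show ?case by (cases i) (auto simp: int_imp_algebraic_int)
next
  case (Cons a rs)
  have a: "algebraic_int (-a)" using Cons.prems by auto
  have IH: "algebraic_int (coeff (\<Prod>\<rho>\<leftarrow>rs. [:-\<rho>, 1:]) j)" for j
    using Cons by auto
  have pe: "(\<Prod>\<rho>\<leftarrow>a # rs. [:-\<rho>, 1:]) = [:-a, 1:] * (\<Prod>\<rho>\<leftarrow>rs. [:-\<rho>, 1:])" by simp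
  show ?case
  proof (cases i)
    case 0
    then show ?thesis unfolding pe coeff_linear_factor_mult using alg_int_mult[OF a IH] by simp
  next
    case (Suc k)
    then show ?thesis unfolding pe coeff_linear_factor_mult using alg_int_add[OF alg_int_mult[OF a IH] IH] by simp
  qed
qed

lemma bound_prod_coeffs:
  fixes rs :: "complex list"
  assumes "\<And>r. r \<in> set rs \<Longrightarrow> cmod r \<le> R"
  shows "cmod (coeff (\<Prod>\<rho>\<leftarrow>rs. [:-\<rho>, 1:]) i) \<le> (1 + R) ^ length rs"
  using assms
proof (induction rs arbitrary: i)
  case Nil
  then show ?case by (cases i) auto
next
  case (Cons a rs)
  have R: "0 \<le> R" using Cons.prems[of a] by (meson list.set_intros(1) norm_ge_zero order_trans)
  have a: "cmod a \<le> R" using Cons.prems by auto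
  define P where "P = (\<Prod>\<rho>\<leftarrow>rs. [:-\<rho>, 1:])"
  have IH: "cmod (coeff P j) \<le> (1 + R) ^ length rs" for j
    using Cons unfolding P_def by auto
  have t2: "cmod (case i of 0 \<Rightarrow> 0 | Suc k \<Rightarrow> coeff P k) \<le> (1 + R) ^ length rs"
    using IH R by (cases i) auto
  have pe: "(\<Prod>\<rho>\<leftarrow>a # rs. [:-\<rho>, 1:]) = [:-a, 1:] * P" by (simp add: P_def)
  have "cmod (coeff ([:-a, 1:] * P) i) \<le> cmod (- a * coeff P i) + cmod (case i of 0 \<Rightarrow> 0 | Suc k \<Rightarrow> coeff P k)"
    unfolding coeff_linear_factor_mult by (rule norm_triangle_ineq)
  also have "\<dots> \<le> R * (1 + R) ^ length rs + (1 + R) ^ length rs"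
    using t2 IH[of i] a R by (intro add_mono) (auto simp: norm_mult intro!: mult_mono)
  also have "\<dots> = (1 + R) ^ length (a # rs)" by (simp add: algebra_simps)
  finally show ?case unfolding pe .
qed


interpretation qv: vector_space "\<lambda>(q::rat) (x::real). of_rat q * x"
  by unfold_locales (auto simp: of_rat_add of_rat_mult algebra_simps)

lemma sum_set_nth: "distinct xs \<Longrightarrow> sum f (set xs) = (\<Sum>i<length xs. f (xs ! i))"
  using sum.reindex_bij_betw[OF bij_betw_nth[of xs "{..<length xs}" "set xs"], of f] by simp

locale nf =
  fixes K :: "real set"
  assumes tr: "totally_real K"
begin

lemma sf: "subfield_real K"
  using tr unfolding totally_real_def number_field_real_def by blast

lemma K0[simp]: "0 \<in> K" and K1[simp]: "1 \<in> K"
  using sf unfolding subfield_real_def by auto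

lemma Kadd[simp]: "x \<in> K \<Longrightarrow> y \<in> K \<Longrightarrow> x + y \<in> K"
  and Kdiff[simp]: "x \<in> K \<Longrightarrow> y \<in> K \<Longrightarrow> x - y \<in> K"
  and Kmult[simp]: "x \<in> K \<Longrightarrow> y \<in> K \<Longrightarrow> x * y \<in> K"
  using sf unfolding subfield_real_def by blast+

lemma Kinv[simp]: "x \<in> K \<Longrightarrow> inverse x \<in> K"
proof (cases "x = 0")
  case True
  then show ?thesis by simp
next
  case False
  assume "x \<in> K"
  then show ?thesis using sf False unfolding subfield_real_def by blast
qed

lemma Kuminus[simp]: "x \<in> K \<Longrightarrow> - x \<in> K"
  using Kdiff[OF K0] by simp

lemma Kdiv[simp]: "x \<in> K \<Longrightarrow> y \<in> K \<Longrightarrow> x / y \<in> K"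
  by (simp add: divide_inverse)

lemma Knat[simp]: "of_nat n \<in> K"
  by (induction n) auto

lemma Kint[simp]: "of_int k \<in> K"
proof (cases "k \<ge> 0")
  case True
  then have "(of_int k :: real) = of_nat (nat k)" by simp
  then show ?thesis by (metis Knat)
next
  case False
  then have "(of_int k :: real) = - of_nat (nat (-k))" by simp
  then show ?thesis by (metis Knat Kuminus)
qed

lemma Krat[simp]: "of_rat q \<in> K"
proof -
  obtain a b where ab: "quotient_of q = (a, b)" by (cases "quotient_of q")
  then have "q = of_int a / of_int b" by (rule quotient_of_div)
  then have "(of_rat q :: real) = of_int a / of_int b" by (simp add: of_rat_divide)
  then show ?thesis by simp
qed

lemma Ksum[intro]: "(\<And>i. i \<in> I \<Longrightarrow> f i \<in> K) \<Longrightarrow> sum f I \<in> K"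
  by (induction I rule: infinite_finite_induct) auto

lemma Kpow[simp]: "x \<in> K \<Longrightarrow> x ^ k \<in> K"
  by (induction k) auto

lemma Kpoly: "x \<in> K \<Longrightarrow> poly (map_poly of_rat p) x \<in> K"
  by (induction p) (auto simp: map_poly_pCons)

lemma Kpoly_int: "x \<in> K \<Longrightarrow> poly (map_poly of_int p) x \<in> K"
  by (induction p) (auto simp: map_poly_pCons)

lemma Ksubspace: "qv.subspace K"
  unfolding qv.subspace_def by auto

lemma K_basis_exists: "\<exists>B. finite B \<and> qv.independent B \<and> qv.span B = K"
proof -
  obtain d :: nat and b :: "nat \<Rightarrow> real" where bK: "\<forall>i<d. b i \<in> K"
    and sp: "\<forall>x\<in>K. \<exists>c. (\<forall>i<d. c i \<in> \<rat>) \<and> x = (\<Sum>i<d. c i * b i)"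
    using tr unfolding totally_real_def number_field_real_def by blast
  obtain B where B: "B \<subseteq> b ` {..<d}" "qv.independent B" "b ` {..<d} \<subseteq> qv.span B"
    using qv.maximal_independent_subset[of "b ` {..<d}"] by blast
  have fin: "finite B" using B(1) finite_subset by blast
  have "qv.span B \<subseteq> K"
    using B(1) bK by (intro qv.span_minimal Ksubspace) auto
  moreover have "K \<subseteq> qv.span B"
  proof
    fix x assume "x \<in> K"
    then obtain c where c: "\<forall>i<d. c i \<in> \<rat>" "x = (\<Sum>i<d. c i * b i)" using sp by blast
    have "c i * b i \<in> qv.span B" if "i < d" for i
    proof -
      have "c i \<in> \<rat>" using c(1) that by auto
      then obtain q where "c i = of_rat q" by (metis Rats_cases)
      moreover have "b i \<in> qv.span B" using B(3) that by auto
      ultimately show ?thesis using qv.span_scale[of "b i" B q] by simp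
    qed
    then show "x \<in> qv.span B" unfolding c(2) by (intro qv.span_sum) auto
  qed
  ultimately show ?thesis using fin B(2) by blast
qed

definition QB :: "real set" where
  "QB = (SOME B. finite B \<and> qv.independent B \<and> qv.span B = K)"

lemma QB: "finite QB" "qv.independent QB" "qv.span QB = K"
  using someI_ex[OF K_basis_exists] unfolding QB_def[symmetric] by auto

definition bl :: "real list" where "bl = sorted_list_of_set QB"
definition dd :: nat where "dd = length bl"

lemma bl_set: "set bl = QB" and bl_dist: "distinct bl"
  using QB(1) by (auto simp: bl_def)

lemma bl_K: "l < dd \<Longrightarrow> bl ! l \<in> K"
proof -
  assume "l < dd"
  then have "bl ! l \<in> QB" using bl_set unfolding dd_def by (metis nth_mem)
  then have "bl ! l \<in> qv.span QB" by (rule qv.span_base)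
  then show ?thesis using QB(3) by simp
qed

lemma bl_span: "l < dd \<Longrightarrow> bl ! l \<in> qv.span QB"
  using bl_K QB(3) by simp

lemma QB0: "0 \<notin> QB"
  using QB(2) qv.dependent_zero by blast

lemma bl_nz: "l < dd \<Longrightarrow> bl ! l \<noteq> 0"
proof -
  assume "l < dd"
  then have "bl ! l \<in> QB" using bl_set unfolding dd_def by (metis nth_mem)
  then show ?thesis using QB0 by auto
qed

lemma dd_pos: "dd > 0"
proof (rule ccontr)
  assume "\<not> dd > 0"
  then have "QB = {}" using bl_set unfolding dd_def by auto
  then have "K = {0}" using QB(3) by simp
  then show False using K1 by auto
qed

definition cr :: "real \<Rightarrow> nat \<Rightarrow> rat" where
  "cr x l = qv.representation QB x (bl ! l)"

lemma K_span: "x \<in> K \<Longrightarrow> x \<in> qv.span QB"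
  using QB(3) by simp

lemma cr_expand: "x \<in> K \<Longrightarrow> x = (\<Sum>l<dd. of_rat (cr x l) * bl ! l)"
proof -
  assume x: "x \<in> K"
  have "(\<Sum>b\<in>QB. of_rat (qv.representation QB x b) * b) = x"
    by (rule qv.sum_representation_eq[OF QB(2) K_span[OF x] QB(1) subset_refl])
  moreover have "(\<Sum>b\<in>QB. of_rat (qv.representation QB x b) * b) = (\<Sum>l<dd. of_rat (cr x l) * bl ! l)"
    unfolding bl_set[symmetric] sum_set_nth[OF bl_dist] cr_def dd_def ..
  ultimately show ?thesis by simp
qed

lemma cr_add: "x \<in> K \<Longrightarrow> y \<in> K \<Longrightarrow> cr (x + y) l = cr x l + cr y l"
proof -
  assume x: "x \<in> K" and y: "y \<in> K"
  show ?thesis unfolding cr_def qv.representation_add[OF QB(2) K_span[OF y] K_span[OF x]] ..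
qed

lemma cr_scale: "x \<in> K \<Longrightarrow> cr (of_rat q * x) l = q * cr x l"
proof -
  assume x: "x \<in> K"
  show ?thesis unfolding cr_def qv.representation_scale[OF QB(2) K_span[OF x]] ..
qed

lemma cr_sum: "(\<And>i. i \<in> I \<Longrightarrow> f i \<in> K) \<Longrightarrow> cr (sum f I) l = (\<Sum>i\<in>I. cr (f i) l)"
proof -
  assume f: "\<And>i. i \<in> I \<Longrightarrow> f i \<in> K"
  have "qv.representation QB (sum f I) = (\<lambda>b. \<Sum>i\<in>I. qv.representation QB (f i) b)"
    by (rule qv.representation_sum[OF QB(2)]) (rule K_span, rule f)
  then show ?thesis unfolding cr_def by simp
qed

lemma cr_basis: "j < dd \<Longrightarrow> l < dd \<Longrightarrow> cr (bl ! j) l = (if l = j then 1 else 0)"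
proof -
  assume j: "j < dd" and l: "l < dd"
  have "bl ! j \<in> QB" using j bl_set unfolding dd_def by (metis nth_mem)
  then have r: "qv.representation QB (bl ! j) = (\<lambda>v. if v = bl ! j then 1 else 0)"
    by (rule qv.representation_basis[OF QB(2)])
  have "(bl ! l = bl ! j) = (l = j)" using j l bl_dist unfolding dd_def by (simp add: nth_eq_iff_index_eq)
  then show ?thesis unfolding cr_def r by simp
qed

lemma cr_lin: "(\<And>i. i \<in> I \<Longrightarrow> f i \<in> K) \<Longrightarrow> cr (\<Sum>i\<in>I. of_rat (c i) * f i) l = (\<Sum>i\<in>I. c i * cr (f i) l)"
  by (subst cr_sum) (auto simp: cr_scale)

definition Mq :: "real \<Rightarrow> rat mat" where
  "Mq x = mat dd dd (\<lambda>(i,j). cr (x * bl ! j) i)"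

lemma Mq_carrier[simp]: "Mq x \<in> carrier_mat dd dd"
  and Mq_dims[simp]: "dim_row (Mq x) = dd" "dim_col (Mq x) = dd"
  by (auto simp: Mq_def)

lemma Mq_index[simp]: "i < dd \<Longrightarrow> j < dd \<Longrightarrow> Mq x $$ (i,j) = cr (x * bl ! j) i"
  by (simp add: Mq_def)

lemma mat_mult_index_sum: "A \<in> carrier_mat n m \<Longrightarrow> B \<in> carrier_mat m k \<Longrightarrow> i < n \<Longrightarrow> j < k \<Longrightarrow>
  (A * B) $$ (i,j) = (\<Sum>l<m. A $$ (i,l) * B $$ (l,j))"
  by (simp add: scalar_prod_def lessThan_atLeast0)

lemma mat_vec_index_sum: "A \<in> carrier_mat n m \<Longrightarrow> v \<in> carrier_vec m \<Longrightarrow> i < n \<Longrightarrow>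
  (A *\<^sub>v v) $ i = (\<Sum>l<m. A $$ (i,l) * v $ l)"
  by (simp add: scalar_prod_def lessThan_atLeast0)

lemma Mq_add: "x \<in> K \<Longrightarrow> y \<in> K \<Longrightarrow> Mq (x + y) = Mq x + Mq y"
  by (rule eq_matI) (auto simp: distrib_right cr_add bl_K)

lemma Mq_mult: assumes x: "x \<in> K" and y: "y \<in> K" shows "Mq (x * y) = Mq x * Mq y"
proof (rule eq_matI)
  fix i j assume "i < dim_row (Mq x * Mq y)" "j < dim_col (Mq x * Mq y)"
  then have i: "i < dd" and j: "j < dd" by auto
  have e: "y * bl ! j = (\<Sum>k<dd. of_rat (cr (y * bl ! j) k) * bl ! k)"
    by (rule cr_expand) (simp add: y bl_K j)
  have e2: "x * y * bl ! j = (\<Sum>k<dd. of_rat (cr (y * bl ! j) k) * (x * bl ! k))"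
    by (subst mult.assoc, subst e) (simp add: sum_distrib_left algebra_simps)
  have "cr (x * y * bl ! j) i = (\<Sum>k<dd. cr (y * bl ! j) k * cr (x * bl ! k) i)"
    unfolding e2 by (rule cr_lin) (simp add: x bl_K)
  moreover have "(Mq x * Mq y) $$ (i, j) = (\<Sum>k<dd. Mq x $$ (i,k) * Mq y $$ (k,j))"
    by (rule mat_mult_index_sum[of _ dd dd _ dd]) (use i j in auto)
  ultimately show "Mq (x * y) $$ (i, j) = (Mq x * Mq y) $$ (i, j)"
    using i j by (simp add: mult.commute)
qed auto

lemma Mq_one: "Mq 1 = 1\<^sub>m dd"
  by (rule eq_matI) (auto simp: cr_basis)

lemma Mq_rat: "Mq (of_rat q) = q \<cdot>\<^sub>m 1\<^sub>m dd"
  by (rule eq_matI) (auto simp: cr_scale cr_basis bl_K)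

lemma Mq_lin: assumes x: "x \<in> K" and i: "i < dd" and j: "j < dd"
  shows "Mq x $$ (i,j) = (\<Sum>l<dd. cr x l * Mq (bl ! l) $$ (i,j))"
proof -
  have "x * bl ! j = (\<Sum>l<dd. of_rat (cr x l) * bl ! l) * bl ! j" using cr_expand[OF x] by simp
  also have "\<dots> = (\<Sum>l<dd. of_rat (cr x l) * (bl ! l * bl ! j))"
    unfolding sum_distrib_right by (simp add: mult.assoc)
  finally have e2: "x * bl ! j = (\<Sum>l<dd. of_rat (cr x l) * (bl ! l * bl ! j))" .
  have "cr (x * bl ! j) i = (\<Sum>l<dd. cr x l * cr (bl ! l * bl ! j) i)"
    unfolding e2 by (rule cr_lin) (simp add: bl_K j)
  then show ?thesis using i j by simp
qed

definition Mc :: "real \<Rightarrow> complex mat" where "Mc x = map_mat of_rat (Mq x)"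
definition MR :: "real \<Rightarrow> real mat" where "MR x = map_mat of_rat (Mq x)"

lemma Mc_carrier[simp]: "Mc x \<in> carrier_mat dd dd" and MR_carrier[simp]: "MR x \<in> carrier_mat dd dd"
  by (auto simp: Mc_def MR_def)

lemma MR_dims[simp]: "dim_row (MR x) = dd" "dim_col (MR x) = dd"
  and Mc_dims[simp]: "dim_row (Mc x) = dd" "dim_col (Mc x) = dd"
  by (auto simp: MR_def Mc_def)

lemma Mc_add: "x \<in> K \<Longrightarrow> y \<in> K \<Longrightarrow> Mc (x + y) = Mc x + Mc y"
  unfolding Mc_def Mq_add by (rule eq_matI) (auto simp: of_rat_add)

lemma Mc_mult: "x \<in> K \<Longrightarrow> y \<in> K \<Longrightarrow> Mc (x * y) = Mc x * Mc y"
  unfolding Mc_def Mq_mult by (rule of_rat_hom.mat_hom_mult) auto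

lemma Mc_comm: "x \<in> K \<Longrightarrow> y \<in> K \<Longrightarrow> Mc x * Mc y = Mc y * Mc x"
  using Mc_mult[of x y] Mc_mult[of y x] by (simp add: mult.commute)

lemma Mc_one: "Mc 1 = 1\<^sub>m dd"
  unfolding Mc_def Mq_one by (rule eq_matI) auto

lemma Mc_rat: "Mc (of_rat q) = of_rat q \<cdot>\<^sub>m 1\<^sub>m dd"
  unfolding Mc_def Mq_rat by (rule eq_matI) auto

lemma Mc_0: "Mc 0 = 0\<^sub>m dd dd"
  using Mc_rat[of 0] by (simp) (rule eq_matI, auto)

definition bvec :: "real vec" where "bvec = vec dd (\<lambda>l. bl ! l)"

lemma bvec_carrier[simp]: "bvec \<in> carrier_vec dd"
  by (simp add: bvec_def)

lemma bvec_nz: "bvec \<noteq> 0\<^sub>v dd"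
proof
  assume "bvec = 0\<^sub>v dd"
  then have "bvec $ 0 = 0" using dd_pos by simp
  then show False using dd_pos bl_nz[of 0] by (simp add: bvec_def)
qed

lemma MR_eig: assumes x: "x \<in> K" shows "transpose_mat (MR x) *\<^sub>v bvec = x \<cdot>\<^sub>v bvec"
proof (rule eq_vecI)
  fix j assume "j < dim_vec (x \<cdot>\<^sub>v bvec)"
  then have j: "j < dd" by (simp add: bvec_def)
  have "(transpose_mat (MR x) *\<^sub>v bvec) $ j = (\<Sum>i<dd. transpose_mat (MR x) $$ (j,i) * bvec $ i)"
    by (rule mat_vec_index_sum[of _ dd dd]) (use j in auto)
  also have "\<dots> = (\<Sum>i<dd. of_rat (cr (x * bl ! j) i) * bl ! i)"
    by (intro sum.cong) (use j in \<open>auto simp: MR_def bvec_def\<close>)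
  also have "\<dots> = x * bl ! j"
    by (rule cr_expand[symmetric]) (simp add: x bl_K j)
  finally show "(transpose_mat (MR x) *\<^sub>v bvec) $ j = (x \<cdot>\<^sub>v bvec) $ j" using j by (simp add: bvec_def)
qed (simp add: MR_def bvec_def)

definition chi :: "real \<Rightarrow> rat poly" where "chi x = char_poly (Mq x)"

lemma chi_monic: "lead_coeff (chi x) = 1" "degree (chi x) = dd"
  using degree_monic_char_poly[OF Mq_carrier[of x]] by (auto simp: chi_def)

lemma chi_nz: "chi x \<noteq> 0"
  using chi_monic(1)[of x] by auto

lemma chi_root: assumes x: "x \<in> K" shows "poly (map_poly of_rat (chi x)) x = 0"
proof -
  have T: "transpose_mat (MR x) \<in> carrier_mat dd dd" by simp
  have "eigenvector (transpose_mat (MR x)) bvec x"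
    unfolding eigenvector_def using MR_eig[OF x] bvec_nz by simp
  then have "eigenvalue (transpose_mat (MR x)) x" unfolding eigenvalue_def by blast
  then have "poly (char_poly (transpose_mat (MR x))) x = 0" using eigenvalue_root_char_poly[OF T] by simp
  also have "char_poly (transpose_mat (MR x)) = char_poly (MR x)" by (rule char_poly_transpose_mat[OF MR_carrier])
  also have "char_poly (MR x) = map_poly of_rat (chi x)"
    unfolding MR_def chi_def by (rule of_rat_hom.char_poly_hom[OF Mq_carrier])
  finally show ?thesis .
qed

lemma emb_1: "field_embedding K \<tau> \<Longrightarrow> \<tau> 1 = 1"
  and emb_add: "field_embedding K \<tau> \<Longrightarrow> x \<in> K \<Longrightarrow> y \<in> K \<Longrightarrow> \<tau> (x + y) = \<tau> x + \<tau> y"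
  and emb_mult: "field_embedding K \<tau> \<Longrightarrow> x \<in> K \<Longrightarrow> y \<in> K \<Longrightarrow> \<tau> (x * y) = \<tau> x * \<tau> y"
  unfolding field_embedding_def by auto

lemma emb_0: "field_embedding K \<tau> \<Longrightarrow> \<tau> 0 = 0"
  using emb_add[of \<tau> 0 0] by simp

lemma emb_uminus: "field_embedding K \<tau> \<Longrightarrow> x \<in> K \<Longrightarrow> \<tau> (- x) = - \<tau> x"
  using emb_add[of \<tau> x "-x"] emb_0[of \<tau>] by (simp add: eq_neg_iff_add_eq_0 add.commute)

lemma emb_diff: "field_embedding K \<tau> \<Longrightarrow> x \<in> K \<Longrightarrow> y \<in> K \<Longrightarrow> \<tau> (x - y) = \<tau> x - \<tau> y"
  using emb_add[of \<tau> x "-y"] emb_uminus[of \<tau> y] by simp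

lemma emb_nat: "field_embedding K \<tau> \<Longrightarrow> \<tau> (of_nat n) = of_nat n"
proof (induction n)
  case 0
  then show ?case using emb_0 by simp
next
  case (Suc n)
  have "\<tau> (of_nat (Suc n)) = \<tau> (1 + of_nat n)" by simp
  also have "\<dots> = 1 + of_nat n" using Suc emb_add[of \<tau> 1 "of_nat n"] emb_1[of \<tau>] by simp
  finally show ?case by simp
qed

lemma emb_int: "field_embedding K \<tau> \<Longrightarrow> \<tau> (of_int k) = of_int k"
proof (cases "k \<ge> 0")
  case True
  assume e: "field_embedding K \<tau>"
  have "(of_int k :: real) = of_nat (nat k)" using True by simp
  then show ?thesis using emb_nat[OF e, of "nat k"] True by simp
next
  case False
  assume e: "field_embedding K \<tau>"
  have "(of_int k :: real) = - of_nat (nat (-k))" using False by simp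
  then show ?thesis using emb_nat[OF e, of "nat (-k)"] emb_uminus[OF e, of "of_nat (nat (-k))"] False by simp
qed

lemma emb_rat: assumes e: "field_embedding K \<tau>" shows "\<tau> (of_rat q) = of_rat q"
proof -
  obtain a b where ab: "quotient_of q = (a, b)" by (cases "quotient_of q")
  have b: "b > 0" using quotient_of_denom_pos[OF ab] .
  have q: "q = of_int a / of_int b" using quotient_of_div[OF ab] .
  have "(of_rat q :: real) * of_int b = of_int a" using b by (simp add: q of_rat_divide)
  then have "\<tau> (of_rat q) * of_int b = of_int a"
    using emb_mult[OF e, of "of_rat q" "of_int b"] emb_int[OF e] by simp
  then have "\<tau> (of_rat q) = of_int a / of_int b" using b by (simp add: field_simps)
  also have "\<dots> = of_rat q" by (simp add: q of_rat_divide)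
  finally show ?thesis .
qed

lemma emb_sum: "field_embedding K \<tau> \<Longrightarrow> (\<And>i. i \<in> I \<Longrightarrow> f i \<in> K) \<Longrightarrow> \<tau> (sum f I) = (\<Sum>i\<in>I. \<tau> (f i))"
proof (induction I rule: infinite_finite_induct)
  case (infinite A)
  then show ?case using emb_0 by simp
next
  case empty
  then show ?case using emb_0 by simp
next
  case (insert x F)
  then show ?case using emb_add[of \<tau> "f x" "sum f F"] by (simp add: Ksum)
qed

lemma emb_pow: "field_embedding K \<tau> \<Longrightarrow> x \<in> K \<Longrightarrow> \<tau> (x ^ k) = \<tau> x ^ k"
  by (induction k) (auto simp: emb_1 emb_mult)

lemma emb_poly: assumes e: "field_embedding K \<tau>" and x: "x \<in> K"
  shows "\<tau> (poly (map_poly of_rat p) x) = poly (map_poly of_rat p) (\<tau> x)"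
proof (induction p rule: pCons_induct)
  case 0
  then show ?case using emb_0[OF e] by simp
next
  case (pCons a p)
  have y: "poly (map_poly of_rat p) x \<in> K" by (rule Kpoly[OF x])
  have "\<tau> (poly (map_poly of_rat (pCons a p)) x) = \<tau> (of_rat a + x * poly (map_poly of_rat p) x)"
    using pCons.hyps by (simp add: map_poly_pCons)
  also have "\<dots> = of_rat a + \<tau> x * \<tau> (poly (map_poly of_rat p) x)"
    using y x by (simp add: emb_add[OF e] emb_mult[OF e] emb_rat[OF e])
  also have "\<dots> = poly (map_poly of_rat (pCons a p)) (\<tau> x)"
    using pCons.hyps pCons.IH by (simp add: map_poly_pCons)
  finally show ?case .
qed

lemma emb_chi_root: "field_embedding K \<tau> \<Longrightarrow> x \<in> K \<Longrightarrow> poly (map_poly of_rat (chi x)) (\<tau> x) = 0"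
  using emb_poly[of \<tau> x "chi x"] chi_root[of x] emb_0[of \<tau>] by simp

lemma map_poly_of_rat_of_int:
  "map_poly (of_rat :: rat \<Rightarrow> 'a::field_char_0) (map_poly of_int p) = map_poly of_int p"
  by (simp add: map_poly_map_poly o_def)

lemma emb_algint: assumes e: "field_embedding K \<tau>" and x: "x \<in> K" and a: "algebraic_int x"
  shows "algebraic_int (\<tau> x)"
proof -
  obtain p :: "int poly" where p: "poly (map_poly of_int p) x = 0" "lead_coeff p = 1"
    using a by (auto simp: algebraic_int_altdef_ipoly)
  have "poly (map_poly of_rat (map_poly of_int p)) (\<tau> x) = \<tau> (poly (map_poly of_rat (map_poly of_int p)) x)"
    using emb_poly[OF e x] by simp
  also have "\<dots> = 0" using p(1) emb_0[OF e] by (simp add: map_poly_of_rat_of_int)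
  finally have "poly (map_poly of_int p) (\<tau> x) = 0" by (simp add: map_poly_of_rat_of_int)
  then show ?thesis using p(2) by (auto simp: algebraic_int_altdef_ipoly)
qed

lemma emb_bounded: assumes x: "x \<in> K" shows "\<exists>R. \<forall>\<tau>. field_embedding K \<tau> \<longrightarrow> cmod (\<tau> x) \<le> R"
proof -
  define P where "P = (map_poly of_rat (chi x) :: complex poly)"
  have "P \<noteq> 0" unfolding P_def using chi_nz[of x] by simp
  then have fin: "finite {z. poly P z = 0}" by (rule poly_roots_finite)
  define R where "R = Max (cmod ` {z. poly P z = 0})"
  have "cmod (\<tau> x) \<le> R" if e: "field_embedding K \<tau>" for \<tau>
  proof -
    have "\<tau> x \<in> {z. poly P z = 0}" using emb_chi_root[OF e x] unfolding P_def by simp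
    then show ?thesis unfolding R_def using fin by (intro Max_ge) auto
  qed
  then show ?thesis by blast
qed

lemma zero_mat_mult_vec[simp]: "v \<in> carrier_vec m \<Longrightarrow> 0\<^sub>m n m *\<^sub>v v = 0\<^sub>v n"
  by (rule eq_vecI) (auto simp: scalar_prod_def)

lemma smult_mat_mult_vec: "(A :: 'a::comm_ring_1 mat) \<in> carrier_mat n m \<Longrightarrow> v \<in> carrier_vec m \<Longrightarrow> (c \<cdot>\<^sub>m A) *\<^sub>v v = c \<cdot>\<^sub>v (A *\<^sub>v v)"
  by (rule eq_vecI) (auto simp: scalar_prod_def sum_distrib_left mult.assoc)

lemma ev_Mc: assumes b: "\<beta> \<in> K" and v: "v \<in> carrier_vec dd"
  shows "ev (Mc \<beta>) (map_poly of_rat p) v = Mc (poly (map_poly of_rat p) \<beta>) *\<^sub>v v"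
proof (induction p rule: pCons_induct)
  case 0
  then show ?case using v by (simp add: Mc_0)
next
  case (pCons a p)
  define y where "y = poly (map_poly of_rat p) \<beta>"
  have y: "y \<in> K" unfolding y_def by (rule Kpoly[OF b])
  have "ev (Mc \<beta>) (map_poly of_rat (pCons a p)) v = of_rat a \<cdot>\<^sub>v v + Mc \<beta> *\<^sub>v (Mc y *\<^sub>v v)"
    using pCons.hyps pCons.IH v by (simp add: map_poly_pCons ev_pCons[OF Mc_carrier v] y_def)
  also have "\<dots> = Mc (of_rat a + \<beta> * y) *\<^sub>v v"
  proof -
    have "Mc (of_rat a + \<beta> * y) = of_rat a \<cdot>\<^sub>m 1\<^sub>m dd + Mc \<beta> * Mc y"
      using y b by (simp add: Mc_add Mc_mult Mc_rat)
    moreover have "(of_rat a \<cdot>\<^sub>m 1\<^sub>m dd + Mc \<beta> * Mc y) *\<^sub>v v = (of_rat a \<cdot>\<^sub>m 1\<^sub>m dd) *\<^sub>v v + (Mc \<beta> * Mc y) *\<^sub>v v"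
      by (rule add_mult_distrib_mat_vec[of _ dd dd]) (use v in auto)
    moreover have "(of_rat a \<cdot>\<^sub>m 1\<^sub>m dd) *\<^sub>v v = of_rat a \<cdot>\<^sub>v v"
      using v by (simp add: smult_mat_mult_vec[of _ dd dd])
    moreover have "(Mc \<beta> * Mc y) *\<^sub>v v = Mc \<beta> *\<^sub>v (Mc y *\<^sub>v v)"
      by (rule assoc_mult_mat_vec[of _ dd dd]) (use v in auto)
    ultimately show ?thesis by simp
  qed
  also have "of_rat a + \<beta> * y = poly (map_poly of_rat (pCons a p)) \<beta>"
    using pCons.hyps by (simp add: map_poly_pCons y_def)
  finally show ?case .
qed

lemma Mc_commute_vec: "x \<in> K \<Longrightarrow> y \<in> K \<Longrightarrow> u \<in> carrier_vec dd \<Longrightarrow> Mc x *\<^sub>v (Mc y *\<^sub>v u) = Mc y *\<^sub>v (Mc x *\<^sub>v u)"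
proof -
  assume x: "x \<in> K" and y: "y \<in> K" and u: "u \<in> carrier_vec dd"
  have "Mc x *\<^sub>v (Mc y *\<^sub>v u) = (Mc x * Mc y) *\<^sub>v u" by (rule assoc_mult_mat_vec[symmetric, of _ dd dd]) (use u in auto)
  also have "\<dots> = (Mc y * Mc x) *\<^sub>v u" using Mc_comm[OF x y] by simp
  also have "\<dots> = Mc y *\<^sub>v (Mc x *\<^sub>v u)" by (rule assoc_mult_mat_vec[of _ dd dd]) (use u in auto)
  finally show ?thesis .
qed

lemma chi_factor: "\<exists>rs. (map_poly of_rat (chi x) :: complex poly) = (\<Prod>\<rho>\<leftarrow>rs. [:-\<rho>, 1:])"
proof -
  obtain rs where "Polynomial.smult (lead_coeff (map_poly of_rat (chi x) :: complex poly)) (\<Prod>\<rho>\<leftarrow>rs. [:-\<rho>, 1:]) = map_poly of_rat (chi x)"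
    using fundamental_theorem_algebra_factorized by blast
  moreover have "lead_coeff (map_poly of_rat (chi x) :: complex poly) = 1"
    using chi_monic[of x] by (simp add: degree_map_poly coeff_map_poly)
  ultimately show ?thesis by (metis smult_1_left)
qed

lemma common_eig:
  assumes a: "a \<in> K" and ev: "eigenvalue (Mc a) lam"
  shows "k \<le> dd \<Longrightarrow> \<exists>v \<mu>. v \<in> carrier_vec dd \<and> v \<noteq> 0\<^sub>v dd \<and> Mc a *\<^sub>v v = lam \<cdot>\<^sub>v v \<and>
     (\<forall>l<k. Mc (bl ! l) *\<^sub>v v = \<mu> l \<cdot>\<^sub>v v)"
proof (induction k)
  case 0
  then show ?case using ev unfolding eigenvalue_def eigenvector_def by auto
next
  case (Suc k)
  then obtain v \<mu> where v: "v \<in> carrier_vec dd" "v \<noteq> 0\<^sub>v dd" "Mc a *\<^sub>v v = lam \<cdot>\<^sub>v v"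
    "\<forall>l<k. Mc (bl ! l) *\<^sub>v v = \<mu> l \<cdot>\<^sub>v v" by auto
  have k: "k < dd" using Suc by simp
  define \<beta> where "\<beta> = bl ! k"
  have b: "\<beta> \<in> K" unfolding \<beta>_def using bl_K[OF k] .
  define W where "W = {u \<in> carrier_vec dd. Mc a *\<^sub>v u = lam \<cdot>\<^sub>v u \<and> (\<forall>l<k. Mc (bl ! l) *\<^sub>v u = \<mu> l \<cdot>\<^sub>v u)}"
  have WN: "W \<subseteq> carrier_vec dd" unfolding W_def by auto
  have cl: "Mc \<beta> *\<^sub>v u \<in> W" if u: "u \<in> W" for u
  proof -
    have uc: "u \<in> carrier_vec dd" using u W_def by auto
    have "Mc a *\<^sub>v (Mc \<beta> *\<^sub>v u) = Mc \<beta> *\<^sub>v (Mc a *\<^sub>v u)" by (rule Mc_commute_vec[OF a b uc])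
    also have "\<dots> = lam \<cdot>\<^sub>v (Mc \<beta> *\<^sub>v u)" using u uc by (simp add: W_def mult_mat_vec_smult[of _ dd dd])
    finally have 1: "Mc a *\<^sub>v (Mc \<beta> *\<^sub>v u) = lam \<cdot>\<^sub>v (Mc \<beta> *\<^sub>v u)" .
    have 2: "Mc (bl ! l) *\<^sub>v (Mc \<beta> *\<^sub>v u) = \<mu> l \<cdot>\<^sub>v (Mc \<beta> *\<^sub>v u)" if l: "l < k" for l
    proof -
      have bl: "bl ! l \<in> K" using l k bl_K by simp
      have "Mc (bl ! l) *\<^sub>v (Mc \<beta> *\<^sub>v u) = Mc \<beta> *\<^sub>v (Mc (bl ! l) *\<^sub>v u)" by (rule Mc_commute_vec[OF bl b uc])
      also have "\<dots> = \<mu> l \<cdot>\<^sub>v (Mc \<beta> *\<^sub>v u)" using u uc l by (simp add: W_def mult_mat_vec_smult[of _ dd dd])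
      finally show ?thesis .
    qed
    have 3: "Mc \<beta> *\<^sub>v u \<in> carrier_vec dd" by (metis Mc_carrier mult_mat_vec_carrier uc)
    show ?thesis using 1 2 3 unfolding W_def by simp
  qed
  have add: "u + w \<in> W" if "u \<in> W" "w \<in> W" for u w
    using that unfolding W_def by (auto simp: mult_add_distrib_mat_vec[of _ dd dd] add_smult_distrib_vec smult_add_distrib_vec[of _ dd])
  have sc: "c \<cdot>\<^sub>v u \<in> W" if "u \<in> W" for c u
    using that unfolding W_def by (auto simp: mult_mat_vec_smult[of _ dd dd] smult_smult_assoc mult.commute)
  have vW: "v \<in> W" unfolding W_def using v by auto
  obtain rs where rs: "(map_poly of_rat (chi \<beta>) :: complex poly) = (\<Prod>\<rho>\<leftarrow>rs. [:-\<rho>, 1:])"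
    using chi_factor by blast
  have "ev (Mc \<beta>) (\<Prod>\<rho>\<leftarrow>rs. [:-\<rho>, 1:]) v = Mc (poly (map_poly of_rat (chi \<beta>)) \<beta>) *\<^sub>v v"
    unfolding rs[symmetric] by (rule ev_Mc[OF b v(1)])
  also have "\<dots> = 0\<^sub>v dd" using chi_root[OF b] v(1) by (simp add: Mc_0)
  finally have e0: "ev (Mc \<beta>) (\<Prod>\<rho>\<leftarrow>rs. [:-\<rho>, 1:]) v = 0\<^sub>v dd" .
  obtain \<zeta> u where u: "u \<in> W" "u \<noteq> 0\<^sub>v dd" "Mc \<beta> *\<^sub>v u = \<zeta> \<cdot>\<^sub>v u"
    using pp_eigen[OF Mc_carrier WN cl add sc vW v(2) e0] by blast
  show ?case
  proof (intro exI conjI)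
    show "u \<in> carrier_vec dd" "u \<noteq> 0\<^sub>v dd" "Mc a *\<^sub>v u = lam \<cdot>\<^sub>v u" using u W_def by auto
    show "\<forall>l<Suc k. Mc (bl ! l) *\<^sub>v u = (\<mu>(k := \<zeta>)) l \<cdot>\<^sub>v u"
      using u unfolding W_def \<beta>_def by (auto simp: less_Suc_eq)
  qed
qed

lemma smult_vec_cancel: "(c :: 'a::field) \<cdot>\<^sub>v v = d \<cdot>\<^sub>v v \<Longrightarrow> v \<in> carrier_vec n \<Longrightarrow> v \<noteq> 0\<^sub>v n \<Longrightarrow> c = d"
proof -
  assume e: "c \<cdot>\<^sub>v v = d \<cdot>\<^sub>v v" and v: "v \<in> carrier_vec n" and nz: "v \<noteq> 0\<^sub>v n"
  obtain r where r: "r < n" "v $ r \<noteq> 0"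
    using nz v by (metis eq_vecI carrier_vecD index_zero_vec(1) index_zero_vec(2))
  have "(c \<cdot>\<^sub>v v) $ r = (d \<cdot>\<^sub>v v) $ r" using e by simp
  then have "c * v $ r = d * v $ r" using r v by simp
  then show "c = d" using r(2) by simp
qed

lemma Mc_lin: assumes x: "x \<in> K" and i: "i < dd" and j: "j < dd"
  shows "Mc x $$ (i,j) = (\<Sum>l<dd. of_rat (cr x l) * Mc (bl ! l) $$ (i,j))"
proof -
  have "Mc x $$ (i,j) = of_rat (Mq x $$ (i,j))" using i j by (simp add: Mc_def)
  also have "\<dots> = of_rat (\<Sum>l<dd. cr x l * Mq (bl ! l) $$ (i,j))" by (simp only: Mq_lin[OF x i j])
  also have "\<dots> = (\<Sum>l<dd. of_rat (cr x l) * of_rat (Mq (bl ! l) $$ (i,j)))" by (simp add: of_rat_sum of_rat_mult)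
  also have "\<dots> = (\<Sum>l<dd. of_rat (cr x l) * Mc (bl ! l) $$ (i,j))"
    by (intro sum.cong refl) (use i j in \<open>simp add: Mc_def\<close>)
  finally show ?thesis .
qed

lemma emb_exists:
  assumes a: "a \<in> K" and ev: "eigenvalue (Mc a) lam"
  shows "\<exists>\<tau>. field_embedding K \<tau> \<and> \<tau> a = lam"
proof -
  obtain v \<mu> where v: "v \<in> carrier_vec dd" "v \<noteq> 0\<^sub>v dd" "Mc a *\<^sub>v v = lam \<cdot>\<^sub>v v"
    "\<forall>l<dd. Mc (bl ! l) *\<^sub>v v = \<mu> l \<cdot>\<^sub>v v" using common_eig[OF a ev order_refl] by blast
  define \<tau> where "\<tau> x = (\<Sum>l<dd. of_rat (cr x l) * \<mu> l)" for x
  have key: "Mc x *\<^sub>v v = \<tau> x \<cdot>\<^sub>v v" if x: "x \<in> K" for x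
  proof (rule eq_vecI)
    fix i assume "i < dim_vec (\<tau> x \<cdot>\<^sub>v v)"
    then have i: "i < dd" using v by simp
    have "(Mc x *\<^sub>v v) $ i = (\<Sum>j<dd. Mc x $$ (i,j) * v $ j)"
      by (rule mat_vec_index_sum[of _ dd dd]) (use v i in auto)
    also have "\<dots> = (\<Sum>j<dd. (\<Sum>l<dd. of_rat (cr x l) * Mc (bl ! l) $$ (i,j)) * v $ j)"
      by (intro sum.cong refl) (use i in \<open>simp add: Mc_lin[OF x]\<close>)
    also have "\<dots> = (\<Sum>j<dd. \<Sum>l<dd. of_rat (cr x l) * (Mc (bl ! l) $$ (i,j) * v $ j))"
      by (simp add: sum_distrib_right mult.assoc)
    also have "\<dots> = (\<Sum>l<dd. \<Sum>j<dd. of_rat (cr x l) * (Mc (bl ! l) $$ (i,j) * v $ j))"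
      by (rule sum.swap)
    also have "\<dots> = (\<Sum>l<dd. of_rat (cr x l) * (\<Sum>j<dd. Mc (bl ! l) $$ (i,j) * v $ j))"
      by (simp add: sum_distrib_left)
    also have "\<dots> = (\<Sum>l<dd. of_rat (cr x l) * (\<mu> l * v $ i))"
    proof (intro sum.cong refl)
      fix l assume "l \<in> {..<dd}"
      then have l: "l < dd" by simp
      have "(\<Sum>j<dd. Mc (bl ! l) $$ (i,j) * v $ j) = (Mc (bl ! l) *\<^sub>v v) $ i"
        by (rule mat_vec_index_sum[symmetric, of _ dd dd]) (use v i in auto)
      also have "\<dots> = \<mu> l * v $ i" using v l i by simp
      finally show "of_rat (cr x l) * (\<Sum>j<dd. Mc (bl ! l) $$ (i,j) * v $ j) = of_rat (cr x l) * (\<mu> l * v $ i)" by simp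
    qed
    also have "\<dots> = (\<tau> x \<cdot>\<^sub>v v) $ i"
      using v i by (simp add: \<tau>_def sum_distrib_right mult.assoc)
    finally show "(Mc x *\<^sub>v v) $ i = (\<tau> x \<cdot>\<^sub>v v) $ i" .
  qed (use v in auto)
  have "field_embedding K \<tau>"
    unfolding field_embedding_def
  proof (intro conjI ballI)
    have "1 \<cdot>\<^sub>v v = \<tau> 1 \<cdot>\<^sub>v v" using key[OF K1] v(1) by (simp add: Mc_one)
    then show "\<tau> 1 = 1" using smult_vec_cancel v by metis
  next
    fix x y assume x: "x \<in> K" and y: "y \<in> K"
    have "\<tau> (x + y) \<cdot>\<^sub>v v = (\<tau> x + \<tau> y) \<cdot>\<^sub>v v"
      using key[OF Kadd[OF x y]] key[OF x] key[OF y] v(1)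
      by (simp add: Mc_add[OF x y] add_mult_distrib_mat_vec[of _ dd dd] add_smult_distrib_vec)
    then show "\<tau> (x + y) = \<tau> x + \<tau> y" using smult_vec_cancel v by metis
    have "\<tau> (x * y) \<cdot>\<^sub>v v = (\<tau> x * \<tau> y) \<cdot>\<^sub>v v"
    proof -
      have "(Mc x * Mc y) *\<^sub>v v = Mc x *\<^sub>v (Mc y *\<^sub>v v)"
        by (rule assoc_mult_mat_vec[of _ dd dd]) (use v(1) in auto)
      then have "\<tau> (x * y) \<cdot>\<^sub>v v = Mc x *\<^sub>v (Mc y *\<^sub>v v)"
        using key[OF Kmult[OF x y]] by (simp add: Mc_mult[OF x y])
      also have "\<dots> = \<tau> y \<cdot>\<^sub>v (\<tau> x \<cdot>\<^sub>v v)" using key[OF x] key[OF y] v(1) by (simp add: mult_mat_vec_smult[of _ dd dd])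
      finally show ?thesis by (simp add: smult_smult_assoc mult.commute)
    qed
    then show "\<tau> (x * y) = \<tau> x * \<tau> y" using smult_vec_cancel v by metis
  qed
  moreover have "\<tau> a = lam"
    using key[OF a] v smult_vec_cancel by metis
  ultimately show ?thesis by blast
qed

lemma cor_of_rat: "complex_of_real (of_rat q) = of_rat q"
  by (cases q) (simp add: of_rat_rat)

lemma rat_int_from_complex: "algebraic_int (of_rat c :: complex) \<Longrightarrow> c \<in> \<int>"
proof -
  assume a: "algebraic_int (of_rat c :: complex)"
  have "(of_rat c :: complex) \<in> \<int>" by (rule rational_algebraic_int_is_int[OF a]) simp
  then obtain k where "(of_rat c :: complex) = of_int k" by (auto elim: Ints_cases)
  then have "(of_rat c :: complex) = of_rat (of_int k)" by simp
  then have "c = of_int k" by (simp only: of_rat_eq_iff)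
  then show ?thesis by simp
qed

lemma finite_bounded:
  "finite {a \<in> K. algebraic_int a \<and> (\<forall>\<tau>. field_embedding K \<tau> \<longrightarrow> cmod (\<tau> a) \<le> R)}"
proof -
  define F where "F = {a \<in> K. algebraic_int a \<and> (\<forall>\<tau>. field_embedding K \<tau> \<longrightarrow> cmod (\<tau> a) \<le> R)}"
  define C where "C = (1 + R) ^ dd"
  define Zs where "Zs = {q::rat. q \<in> \<int> \<and> \<bar>of_rat q :: real\<bar> \<le> C}"
  have finZ: "finite Zs"
  proof (rule finite_subset)
    show "Zs \<subseteq> of_int ` {-\<lceil>C\<rceil>..\<lceil>C\<rceil>}"
    proof
      fix q assume "q \<in> Zs"
      then have q: "q \<in> \<int>" "\<bar>of_rat q :: real\<bar> \<le> C" unfolding Zs_def by auto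
      from q(1) obtain k where k0: "q = of_int k" by (auto elim: Ints_cases)
      have k: "q = of_int k" "\<bar>real_of_int k\<bar> \<le> C" using k0 q(2) by auto
      have c: "C \<le> of_int \<lceil>C\<rceil>" by (rule le_of_int_ceiling)
      have k2: "real_of_int k \<le> C" "- C \<le> real_of_int k" using k(2) by (auto simp: abs_le_iff)
      have "real_of_int k \<le> of_int \<lceil>C\<rceil>" using k2 c by linarith
      moreover have "real_of_int (-\<lceil>C\<rceil>) \<le> of_int k" using k2 c by (simp only: of_int_minus)
      ultimately have "real_of_int k \<le> of_int \<lceil>C\<rceil>" "real_of_int (-\<lceil>C\<rceil>) \<le> of_int k" by auto
      then have "k \<in> {-\<lceil>C\<rceil>..\<lceil>C\<rceil>}" by (simp only: of_int_le_iff atLeastAtMost_iff)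
      then show "q \<in> of_int ` {-\<lceil>C\<rceil>..\<lceil>C\<rceil>}" using k by auto
    qed
  qed simp
  define S where "S = {p::rat poly. lead_coeff p = 1 \<and> degree p = dd \<and> (\<forall>i\<le>dd. coeff p i \<in> Zs)}"
  have finS: "finite S"
  proof -
    have inj: "inj_on (\<lambda>p. restrict (coeff p) {..dd}) S"
    proof (rule inj_onI)
      fix p q assume p: "p \<in> S" and q: "q \<in> S" and e: "restrict (coeff p) {..dd} = restrict (coeff q) {..dd}"
      show "p = q"
      proof (rule poly_eqI)
        fix i
        show "coeff p i = coeff q i"
        proof (cases "i \<le> dd")
          case True
          then show ?thesis using fun_cong[OF e, of i] by simp
        next
          case False
          then show ?thesis using p q unfolding S_def by (simp add: coeff_eq_0)
        qed
      qed
    qed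
    have "(\<lambda>p. restrict (coeff p) {..dd}) ` S \<subseteq> PiE {..dd} (\<lambda>_. Zs)"
    proof (rule image_subsetI)
      fix p assume p: "p \<in> S"
      show "restrict (coeff p) {..dd} \<in> PiE {..dd} (\<lambda>_. Zs)"
        by (subst restrict_PiE_iff) (use p in \<open>auto simp: S_def\<close>)
    qed
    then have "finite ((\<lambda>p. restrict (coeff p) {..dd}) ` S)"
      by (rule finite_subset) (simp add: finite_PiE finZ)
    then show ?thesis using finite_imageD inj by blast
  qed
  have chiS: "chi a \<in> S" if a: "a \<in> F" for a
  proof -
    have aK: "a \<in> K" using a F_def by auto
    have "char_poly (Mc a) = map_poly of_rat (chi a)"
      unfolding Mc_def chi_def by (rule of_rat_hom.char_poly_hom[OF Mq_carrier])
    moreover obtain rs where rs: "char_poly (Mc a) = (\<Prod>\<rho>\<leftarrow>rs. [:-\<rho>, 1:])" "length rs = dd"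
      using char_poly_factorized[OF Mc_carrier] by blast
    ultimately have P: "map_poly of_rat (chi a) = (\<Prod>\<rho>\<leftarrow>rs. [:-\<rho>, 1:])" by simp
    have rsprop: "algebraic_int r \<and> cmod r \<le> R" if r: "r \<in> set rs" for r
    proof -
      have "poly (char_poly (Mc a)) r = 0" using rs(1) linear_poly_root[OF r] by simp
      then have "eigenvalue (Mc a) r" using eigenvalue_root_char_poly[OF Mc_carrier] by simp
      then obtain \<tau> where t: "field_embedding K \<tau>" "\<tau> a = r" using emb_exists[OF aK] by blast
      show ?thesis using t emb_algint[OF t(1) aK] a unfolding F_def by auto
    qed
    have "coeff (chi a) i \<in> Zs" for i
    proof -
      have eq: "(of_rat (coeff (chi a) i) :: complex) = coeff (\<Prod>\<rho>\<leftarrow>rs. [:-\<rho>, 1:]) i"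
        using arg_cong[OF P, of "\<lambda>p. coeff p i"] by (simp add: coeff_map_poly)
      have ai: "algebraic_int (of_rat (coeff (chi a) i) :: complex)"
        unfolding eq by (rule alg_int_prod_coeffs) (use rsprop in auto)
      have "cmod (of_rat (coeff (chi a) i) :: complex) \<le> (1 + R) ^ length rs"
        unfolding eq by (rule bound_prod_coeffs) (use rsprop in auto)
      then have "\<bar>of_rat (coeff (chi a) i) :: real\<bar> \<le> C"
        unfolding C_def rs(2) cor_of_rat[symmetric] by simp
      then show ?thesis unfolding Zs_def using rat_int_from_complex[OF ai] by simp
    qed
    then show ?thesis unfolding S_def using chi_monic by auto
  qed
  have "F \<subseteq> (\<Union>p\<in>S. {x. poly (map_poly of_rat p) x = 0})"
    using chiS chi_root unfolding F_def by blast
  moreover have "finite (\<Union>p\<in>S. {x::real. poly (map_poly of_rat p) x = 0})"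
  proof (rule finite_UN_I[OF finS])
    fix p assume "p \<in> S"
    then have "p \<noteq> 0" unfolding S_def by auto
    then have "(map_poly of_rat p :: real poly) \<noteq> 0" by simp
    then show "finite {x::real. poly (map_poly of_rat p) x = 0}" by (rule poly_roots_finite)
  qed
  ultimately show ?thesis unfolding F_def by (rule finite_subset)
qed

lemma common_denom: "finite (A :: rat set) \<Longrightarrow> \<exists>D::int. D > 0 \<and> (\<forall>q\<in>A. of_int D * q \<in> \<int>)"
proof (induction A rule: finite_induct)
  case empty
  then show ?case by (intro exI[of _ 1]) auto
next
  case (insert q A)
  then obtain D :: int where D: "D > 0" "\<forall>q\<in>A. of_int D * q \<in> \<int>" by blast
  obtain a b where ab: "quotient_of q = (a, b)" by (cases "quotient_of q")
  have b: "b > 0" using quotient_of_denom_pos[OF ab] .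
  have q: "q = of_int a / of_int b" using quotient_of_div[OF ab] .
  have bq: "of_int b * q = of_int a" using b by (simp add: q)
  have "of_int (D * b) * q = of_int D * (of_int b * q)" by (simp add: mult.assoc)
  also have "\<dots> = of_int (D * a)" by (simp add: bq)
  finally have 1: "of_int (D * b) * q \<in> \<int>" by (metis Ints_of_int)
  have 2: "of_int (D * b) * q' \<in> \<int>" if "q' \<in> A" for q'
  proof -
    have "of_int (D * b) * q' = of_int b * (of_int D * q')" by simp
    then show ?thesis using D(2) that by (metis Ints_mult Ints_of_int)
  qed
  show ?case using 1 2 D(1) b by (intro exI[of _ "D * b"]) auto
qed

lemma denom_exists: assumes c: "c \<in> K" shows "\<exists>D::int. D > 0 \<and> algebraic_int (of_int D * c)"
proof -
  obtain D :: int where D: "D > 0" "\<forall>q\<in>{Mq c $$ (i,j) |i j. i < dd \<and> j < dd}. of_int D * q \<in> \<int>"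
    using common_denom[of "{Mq c $$ (i,j) |i j. i < dd \<and> j < dd}"] by (auto simp: finite_image_set2)
  define Z :: "int mat" where "Z = mat dd dd (\<lambda>(j,i). \<lfloor>of_int D * Mq c $$ (i,j)\<rfloor>)"
  have Zc: "Z \<in> carrier_mat dd dd" by (simp add: Z_def)
  have Zint: "(of_int (Z $$ (j,i)) :: rat) = of_int D * Mq c $$ (i,j)" if "i < dd" "j < dd" for i j
  proof -
    have "of_int D * Mq c $$ (i,j) \<in> \<int>" using D(2) that by blast
    then show ?thesis using that by (simp add: Z_def)
  qed
  define w :: "complex vec" where "w = vec dd (\<lambda>l. of_real (bl ! l))"
  have wc: "w \<in> carrier_vec dd" by (simp add: w_def)
  have w0: "w \<noteq> 0\<^sub>v dd"
  proof
    assume "w = 0\<^sub>v dd"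
    then have "w $ 0 = 0" using dd_pos by simp
    then show False using dd_pos bl_nz[of 0] by (simp add: w_def)
  qed
  have "map_mat of_int Z *\<^sub>v w = of_real (of_int D * c) \<cdot>\<^sub>v w"
  proof (rule eq_vecI)
    fix j assume "j < dim_vec (of_real (of_int D * c) \<cdot>\<^sub>v w)"
    then have j: "j < dd" by (simp add: w_def)
    have "(map_mat of_int Z *\<^sub>v w) $ j = (\<Sum>i<dd. (map_mat of_int Z) $$ (j,i) * w $ i)"
      by (rule mat_vec_index_sum[of _ dd dd]) (use Zc wc j in auto)
    also have "\<dots> = (\<Sum>i<dd. of_int (Z $$ (j,i)) * w $ i)"
      by (intro sum.cong refl) (use Zc j in auto)
    also have "\<dots> = (\<Sum>i<dd. of_real (of_rat (of_int D * Mq c $$ (i,j)) * bl ! i))"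
    proof (intro sum.cong refl)
      fix i assume "i \<in> {..<dd}"
      then have i: "i < dd" by simp
      have "(of_int (Z $$ (j,i)) :: complex) = of_rat (of_int (Z $$ (j,i)))" by simp
      also have "\<dots> = of_rat (of_int D * Mq c $$ (i,j))" using Zint[OF i j] by simp
      finally show "of_int (Z $$ (j,i)) * w $ i = of_real (of_rat (of_int D * Mq c $$ (i,j)) * bl ! i)"
        using i by (simp add: w_def cor_of_rat)
    qed
    also have "\<dots> = of_real (of_int D * (\<Sum>i<dd. of_rat (cr (c * bl ! j) i) * bl ! i))"
      using j by (simp add: of_rat_mult sum_distrib_left mult.assoc)
    also have "(\<Sum>i<dd. of_rat (cr (c * bl ! j) i) * bl ! i) = c * bl ! j"
      by (rule cr_expand[symmetric]) (simp add: c bl_K j)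
    also have "of_real (of_int D * (c * bl ! j)) = (of_real (of_int D * c) \<cdot>\<^sub>v w) $ j"
      using j by (simp add: w_def mult.assoc)
    finally show "(map_mat of_int Z *\<^sub>v w) $ j = (of_real (of_int D * c) \<cdot>\<^sub>v w) $ j" .
  qed (use Zc wc in auto)
  then have "algebraic_int (complex_of_real (of_int D * c))" by (rule alg_int_eigen[OF Zc wc w0])
  then have "algebraic_int (of_int D * c)" by (simp only: algebraic_int_of_real_iff)
  then show ?thesis using D(1) by blast
qed

end

lemma alg_int_mult_real: "algebraic_int (x::real) \<Longrightarrow> algebraic_int y \<Longrightarrow> algebraic_int (x * y)"
  using alg_int_mult[of "of_real x" "of_real y"] by (metis algebraic_int_of_real_iff of_real_mult)

lemma alg_int_add_real: "algebraic_int (x::real) \<Longrightarrow> algebraic_int y \<Longrightarrow> algebraic_int (x + y)"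
  using alg_int_add[of "of_real x" "of_real y"] by (metis algebraic_int_of_real_iff of_real_add)


lemma bil_carrier_expand:
  assumes B: "B \<in> carrier_mat n n" and x: "x \<in> carrier_vec n" and y: "y \<in> carrier_vec n"
  shows "bil B x y = (\<Sum>i<n. x $ i * (\<Sum>j<n. B $$ (i,j) * y $ j))"
  using B x y by (simp add: bil_def scalar_prod_def lessThan_atLeast0)

lemma bil_add_left: "B \<in> carrier_mat n n \<Longrightarrow> x \<in> carrier_vec n \<Longrightarrow> y \<in> carrier_vec n \<Longrightarrow> z \<in> carrier_vec n \<Longrightarrow>
  bil B (x + y) z = bil B x z + bil B y z"
  unfolding bil_def by (rule add_scalar_prod_distrib[of _ n]) auto

lemma bil_add_right: "B \<in> carrier_mat n n \<Longrightarrow> x \<in> carrier_vec n \<Longrightarrow> y \<in> carrier_vec n \<Longrightarrow> z \<in> carrier_vec n \<Longrightarrow>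
  bil B x (y + z) = bil B x y + bil B x z"
  unfolding bil_def by (simp add: mult_add_distrib_mat_vec[of _ n n] scalar_prod_add_distrib[of _ n])

lemma bil_smult_left: "B \<in> carrier_mat n n \<Longrightarrow> x \<in> carrier_vec n \<Longrightarrow> z \<in> carrier_vec n \<Longrightarrow>
  bil B (c \<cdot>\<^sub>v x) z = c * bil B x z"
  unfolding bil_def by (rule smult_scalar_prod_distrib[of _ n]) auto

lemma bil_smult_right: "B \<in> carrier_mat n n \<Longrightarrow> x \<in> carrier_vec n \<Longrightarrow> z \<in> carrier_vec n \<Longrightarrow>
  bil B x (c \<cdot>\<^sub>v z) = c * bil B x z"
  unfolding bil_def by (simp add: mult_mat_vec[of _ n n] scalar_prod_smult_distrib[of _ n])

lemma bil_minus_left: "B \<in> carrier_mat n n \<Longrightarrow> x \<in> carrier_vec n \<Longrightarrow> y \<in> carrier_vec n \<Longrightarrow> z \<in> carrier_vec n \<Longrightarrow>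
  bil B (x - y) z = bil B x z - bil B y z"
  unfolding bil_def by (rule minus_scalar_prod_distrib[of _ n]) auto

lemma bil_minus_right: "B \<in> carrier_mat n n \<Longrightarrow> x \<in> carrier_vec n \<Longrightarrow> y \<in> carrier_vec n \<Longrightarrow> z \<in> carrier_vec n \<Longrightarrow>
  bil B x (y - z) = bil B x y - bil B x z"
  unfolding bil_def by (simp add: mult_minus_distrib_mat_vec[of _ n n] scalar_prod_minus_distrib[of _ n])

lemma bil_zero_left[simp]: "B \<in> carrier_mat n n \<Longrightarrow> z \<in> carrier_vec n \<Longrightarrow> bil B (0\<^sub>v n) z = 0"
  unfolding bil_def by simp

lemma bil_sym: assumes B: "B \<in> carrier_mat n n" and s: "transpose_mat B = B" and x: "x \<in> carrier_vec n" and y: "y \<in> carrier_vec n"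
  shows "bil B x y = bil B y x"
proof -
  have "bil B x y = (transpose_mat B *\<^sub>v x) \<bullet> y"
    unfolding bil_def by (rule transpose_vec_mult_scalar[symmetric, OF B y x])
  also have "\<dots> = (B *\<^sub>v x) \<bullet> y" using s by simp
  also have "\<dots> = y \<bullet> (B *\<^sub>v x)" by (rule comm_scalar_prod[of _ n]) (use B x y in auto)
  finally show ?thesis unfolding bil_def .
qed

lemma bil_isometry:
  assumes B: "B \<in> carrier_mat n n" and g: "g \<in> carrier_mat n n" and iso: "transpose_mat g * B * g = B"
    and x: "x \<in> carrier_vec n" and y: "y \<in> carrier_vec n"
  shows "bil B (g *\<^sub>v x) (g *\<^sub>v y) = bil B x y"
proof -
  define w where "w = B *\<^sub>v (g *\<^sub>v y)"
  have w: "w \<in> carrier_vec n" unfolding w_def using B g y by simp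
  have "bil B (g *\<^sub>v x) (g *\<^sub>v y) = (g *\<^sub>v x) \<bullet> w" unfolding bil_def w_def ..
  also have "\<dots> = w \<bullet> (g *\<^sub>v x)" by (rule comm_scalar_prod[of _ n]) (use g x w in auto)
  also have "\<dots> = (transpose_mat g *\<^sub>v w) \<bullet> x" by (rule transpose_vec_mult_scalar[symmetric, OF g x w])
  also have "transpose_mat g *\<^sub>v w = (transpose_mat g * B * g) *\<^sub>v y"
  proof -
    have gT: "transpose_mat g \<in> carrier_mat n n" using g by simp
    have "(transpose_mat g * B * g) *\<^sub>v y = (transpose_mat g * B) *\<^sub>v (g *\<^sub>v y)"
      by (rule assoc_mult_mat_vec[of _ n n]) (use gT B g y in auto)
    also have "\<dots> = transpose_mat g *\<^sub>v (B *\<^sub>v (g *\<^sub>v y))"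
      by (rule assoc_mult_mat_vec[of _ n n]) (use gT B g y in auto)
    finally show ?thesis unfolding w_def by simp
  qed
  also have "\<dots> = B *\<^sub>v y" using iso by simp
  also have "(B *\<^sub>v y) \<bullet> x = x \<bullet> (B *\<^sub>v y)" by (rule comm_scalar_prod[of _ n]) (use B x y in auto)
  finally show ?thesis unfolding bil_def .
qed

lemma cauchy_schwarz_bil:
  assumes B: "B \<in> carrier_mat n n" and s: "transpose_mat B = B"
    and VN: "V \<subseteq> carrier_vec n"
    and add: "\<And>u v. u \<in> V \<Longrightarrow> v \<in> V \<Longrightarrow> u + v \<in> V"
    and sc: "\<And>c v. v \<in> V \<Longrightarrow> c \<cdot>\<^sub>v v \<in> V"
    and psd: "\<And>v. v \<in> V \<Longrightarrow> bil B v v \<ge> 0"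
    and y: "y \<in> V" and u: "u \<in> V"
  shows "(bil B y u)^2 \<le> bil B y y * bil B u u"
proof -
  have yc: "y \<in> carrier_vec n" and uc: "u \<in> carrier_vec n" using y u VN by auto
  define a where "a = bil B u u"
  define b where "b = bil B y u"
  define c where "c = bil B y y"
  have q: "0 \<le> c + 2 * t * b + t^2 * a" for t
  proof -
    have "y + t \<cdot>\<^sub>v u \<in> V" using add[OF y sc[OF u]] .
    then have "0 \<le> bil B (y + t \<cdot>\<^sub>v u) (y + t \<cdot>\<^sub>v u)" by (rule psd)
    also have "\<dots> = c + t * bil B u y + t * b + t * (t * a)"
      using B yc uc by (simp add: bil_add_left[of _ n] bil_add_right[of _ n] bil_smult_left[of _ n] bil_smult_right[of _ n] a_def b_def c_def algebra_simps)
    also have "bil B u y = b" unfolding b_def by (rule bil_sym[OF B s uc yc])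
    finally show ?thesis by (simp add: power2_eq_square algebra_simps)
  qed
  have a0: "a \<ge> 0" unfolding a_def by (rule psd[OF u])
  show ?thesis
  proof (cases "a = 0")
    case True
    have "b = 0"
    proof (rule ccontr)
      assume "b \<noteq> 0"
      have "0 \<le> c + 2 * (- (c + 1) / (2 * b)) * b + (- (c + 1) / (2 * b))^2 * a" by (rule q)
      then show False using True \<open>b \<noteq> 0\<close> by (simp add: field_simps)
    qed
    then show ?thesis using True by (simp add: a_def b_def c_def)
  next
    case False
    then have ap: "a > 0" using a0 by simp
    have "0 \<le> c + 2 * (- b / a) * b + (- b / a)^2 * a" by (rule q)
    then have "0 \<le> c - b^2 / a" using ap by (simp add: power2_eq_square field_simps)
    then have "b^2 / a \<le> c" by simp
    then have "b^2 \<le> c * a" using ap by (simp add: divide_le_eq)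
    then show ?thesis by (simp add: a_def b_def c_def)
  qed
qed


lemma sum_lessThan_add_split: "(\<Sum>j<(a::nat)+b. f j) = (\<Sum>j<a. f j) + (\<Sum>j<b. f (a + j))"
  by (induction b) (auto simp: add.assoc)

lemma lincomb_carrier[simp]: "lincomb_vec n m c xs \<in> carrier_vec n"
  by (simp add: lincomb_vec_def)

lemma lincomb_index: "i < n \<Longrightarrow> lincomb_vec n m c xs $ i = (\<Sum>j<m. c j * (xs j $ i))"
  by (simp add: lincomb_vec_def)

lemma lincomb_add: "lincomb_vec n m1 c1 xs1 + lincomb_vec n m2 c2 xs2 =
  lincomb_vec n (m1 + m2) (\<lambda>j. if j < m1 then c1 j else c2 (j - m1)) (\<lambda>j. if j < m1 then xs1 j else xs2 (j - m1))"
  by (rule eq_vecI) (auto simp: lincomb_vec_def sum_lessThan_add_split)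

lemma lincomb_smult: "r \<cdot>\<^sub>v lincomb_vec n m c xs = lincomb_vec n m (\<lambda>j. r * c j) xs"
  by (rule eq_vecI) (auto simp: lincomb_vec_def sum_distrib_left mult.assoc)

lemma lincomb_single: "x \<in> carrier_vec n \<Longrightarrow> lincomb_vec n 1 (\<lambda>_. 1) (\<lambda>_. x) = x"
  by (rule eq_vecI) (auto simp: lincomb_vec_def)

lemma mvi: "A \<in> carrier_mat n m \<Longrightarrow> v \<in> carrier_vec m \<Longrightarrow> i < n \<Longrightarrow>
  (A *\<^sub>v v) $ i = (\<Sum>l<m. A $$ (i,l) * v $ l)"
  by (simp add: scalar_prod_def lessThan_atLeast0)

lemma lincomb_mat: assumes g: "g \<in> carrier_mat n n" and xs: "\<And>j. j < m \<Longrightarrow> xs j \<in> carrier_vec n"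
  shows "g *\<^sub>v lincomb_vec n m c xs = lincomb_vec n m c (\<lambda>j. g *\<^sub>v xs j)"
proof (rule eq_vecI)
  fix i assume "i < dim_vec (lincomb_vec n m c (\<lambda>j. g *\<^sub>v xs j))"
  then have i: "i < n" by (simp add: lincomb_vec_def)
  have "(g *\<^sub>v lincomb_vec n m c xs) $ i = (\<Sum>k<n. g $$ (i,k) * (\<Sum>j<m. c j * (xs j $ k)))"
    using g i by (simp add: scalar_prod_def lessThan_atLeast0 lincomb_vec_def)
  also have "\<dots> = (\<Sum>j<m. c j * (\<Sum>k<n. g $$ (i,k) * (xs j $ k)))"
    by (simp add: sum_distrib_left sum.swap[of _ "{..<n}" "{..<m}"] mult.left_commute)
  also have "\<dots> = (\<Sum>j<m. c j * ((g *\<^sub>v xs j) $ i))"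
  proof (intro sum.cong refl)
    fix j assume "j \<in> {..<m}"
    then have "xs j \<in> carrier_vec n" using xs by simp
    then show "c j * (\<Sum>k<n. g $$ (i,k) * (xs j $ k)) = c j * ((g *\<^sub>v xs j) $ i)"
      using mvi[OF g _ i] by simp
  qed
  finally show "(g *\<^sub>v lincomb_vec n m c xs) $ i = lincomb_vec n m c (\<lambda>j. g *\<^sub>v xs j) $ i"
    using i by (simp add: lincomb_vec_def)
qed (use g in \<open>auto simp: lincomb_vec_def\<close>)

lemma span_with_carrier: "span_with S n A \<subseteq> carrier_vec n"
  by (auto simp: span_with_def)

lemma span_with_add: "u \<in> span_with S n A \<Longrightarrow> v \<in> span_with S n A \<Longrightarrow> u + v \<in> span_with S n A"
proof -
  assume "u \<in> span_with S n A" "v \<in> span_with S n A"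
  then obtain m1 c1 xs1 m2 c2 xs2 where u: "u = lincomb_vec n m1 c1 xs1" "\<forall>j<m1. c1 j \<in> S" "\<forall>j<m1. xs1 j \<in> A"
    and v: "v = lincomb_vec n m2 c2 xs2" "\<forall>j<m2. c2 j \<in> S" "\<forall>j<m2. xs2 j \<in> A"
    unfolding span_with_def by blast
  show ?thesis unfolding span_with_def u(1) v(1) lincomb_add
    using u v by (intro CollectI exI conjI[OF refl]) auto
qed

lemma span_with_UNIV_smult: "v \<in> span_with UNIV n A \<Longrightarrow> r \<cdot>\<^sub>v v \<in> span_with UNIV n A"
proof -
  assume "v \<in> span_with UNIV n A"
  then obtain m c xs where v: "v = lincomb_vec n m c xs" "\<forall>j<m. xs j \<in> A" unfolding span_with_def by blast
  have "r \<cdot>\<^sub>v v = lincomb_vec n m (\<lambda>j. r * c j) xs" unfolding v(1) lincomb_smult ..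
  then show ?thesis unfolding span_with_def using v(2) by blast
qed

lemma span_with_UNIV_base: "A \<subseteq> carrier_vec n \<Longrightarrow> x \<in> A \<Longrightarrow> x \<in> span_with UNIV n A"
proof -
  assume A: "A \<subseteq> carrier_vec n" and x: "x \<in> A"
  have e: "x = lincomb_vec n 1 (\<lambda>_. 1) (\<lambda>_. x)" using lincomb_single[of x n] A x by auto
  have "\<forall>j<(1::nat). (\<lambda>_. x) j \<in> A" using x by simp
  then show ?thesis unfolding span_with_def using e by blast
qed

lemma span_with_UNIV_diff: assumes "A \<subseteq> carrier_vec n" "u \<in> span_with UNIV n A" "v \<in> span_with UNIV n A"
  shows "u - v \<in> span_with UNIV n A"
proof -
  have "u - v = u + (-1) \<cdot>\<^sub>v v" using assms span_with_carrier by (intro eq_vecI) auto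
  then show ?thesis using span_with_add[OF assms(2) span_with_UNIV_smult[OF assms(3)]] by simp
qed

interpretation rv: vector_space "\<lambda>(r::real) (f::nat\<Rightarrow>real). (\<lambda>i. r * f i)"
  by unfold_locales (auto simp: algebra_simps fun_eq_iff)

definition phiv :: "nat \<Rightarrow> real vec \<Rightarrow> nat \<Rightarrow> real" where
  "phiv n v = (\<lambda>i. if i < n then v $ i else 0)"

lemma phiv_span: "phiv n v \<in> rv.span ((\<lambda>i. (\<lambda>k. if k = i then 1 else 0)) ` {..<n})"
proof -
  let ?E = "(\<lambda>i. (\<lambda>k::nat. if k = i then 1 else 0::real)) ` {..<n}"
  have "m \<le> n \<Longrightarrow> (\<lambda>k. if k < m then v $ k else 0) \<in> rv.span ?E" for m
  proof (induction m)
    case 0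
    have "(\<lambda>k::nat. if k < 0 then v $ k else 0) = 0" by (auto simp: fun_eq_iff)
    then show ?case using rv.span_zero by simp
  next
    case (Suc m)
    have e: "(\<lambda>k. if k = m then 1 else 0) \<in> rv.span ?E" using Suc.prems by (intro rv.span_base) auto
    have "(\<lambda>k. if k < Suc m then v $ k else 0) = (\<lambda>k. if k < m then v $ k else 0) + (\<lambda>i. v $ m * (if i = m then 1 else 0))"
      by (auto simp: fun_eq_iff less_Suc_eq)
    then show ?case using rv.span_add[OF Suc.IH rv.span_scale[OF e]] Suc.prems by simp
  qed
  then show ?thesis unfolding phiv_def by simp
qed

lemma finite_test_set:
  assumes ON: "Ob \<subseteq> carrier_vec n" and B: "B \<in> carrier_mat n n"
  shows "\<exists>U. finite U \<and> U \<subseteq> Ob \<and> (\<forall>z \<in> carrier_vec n. (\<forall>u\<in>U. bil B z u = 0) \<longrightarrow> (\<forall>y\<in>Ob. bil B z y = 0))"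
proof -
  let ?E = "(\<lambda>i. (\<lambda>k::nat. if k = i then 1 else 0::real)) ` {..<n}"
  obtain Bs where Bs: "Bs \<subseteq> phiv n ` Ob" "rv.independent Bs" "phiv n ` Ob \<subseteq> rv.span Bs"
    using rv.maximal_independent_subset[of "phiv n ` Ob"] by blast
  have "Bs \<subseteq> rv.span ?E" using Bs(1) phiv_span by blast
  then have finB: "finite Bs" using rv.independent_span_bound[of ?E Bs] Bs(2) by simp
  define U where "U = inv_into Ob (phiv n) ` Bs"
  have finU: "finite U" unfolding U_def using finB by simp
  have UO: "U \<subseteq> Ob" unfolding U_def using Bs(1) by (auto intro: inv_into_into)
  have "(\<forall>u\<in>U. bil B z u = 0) \<longrightarrow> (\<forall>y\<in>Ob. bil B z y = 0)" if z: "z \<in> carrier_vec n" for z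
  proof (intro impI ballI)
    fix y assume U0: "\<forall>u\<in>U. bil B z u = 0" and y: "y \<in> Ob"
    define ell where "ell f = (\<Sum>i<n. z $ i * (\<Sum>j<n. B $$ (i,j) * f j))" for f :: "nat \<Rightarrow> real"
    have ell_phi: "ell (phiv n v) = bil B z v" if "v \<in> carrier_vec n" for v
      using bil_carrier_expand[OF B z that] unfolding ell_def phiv_def by simp
    have ell0: "ell 0 = 0" unfolding ell_def by simp
    have elladd: "ell (f + h) = ell f + ell h" for f h
      unfolding ell_def by (simp add: sum.distrib distrib_left)
    have ellsc: "ell (\<lambda>i. c * f i) = c * ell f" for c f
      unfolding ell_def by (simp add: sum_distrib_left mult.left_commute)
    have sub: "rv.subspace {f. ell f = 0}"
      unfolding rv.subspace_def using ell0 elladd ellsc by auto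
    have "ell b = 0" if b: "b \<in> Bs" for b
    proof -
      have "inv_into Ob (phiv n) b \<in> U" unfolding U_def using b by simp
      then have "bil B z (inv_into Ob (phiv n) b) = 0" using U0 by blast
      moreover have "phiv n (inv_into Ob (phiv n) b) = b" using b Bs(1) by (auto intro: f_inv_into_f)
      moreover have "inv_into Ob (phiv n) b \<in> carrier_vec n" using b Bs(1) ON by (auto intro: inv_into_into)
      ultimately show ?thesis using ell_phi by metis
    qed
    then have "\<forall>f\<in>rv.span Bs. ell f = 0" using rv.span_induct[OF _ sub] by blast
    moreover have "phiv n y \<in> rv.span Bs" using Bs(3) y by blast
    ultimately have "ell (phiv n y) = 0" by blast
    then show "bil B z y = 0" using ell_phi y ON by auto
  qed
  then show ?thesis using finU UO by blast
qed


lemma geom_poly: "(\<Sum>i<N. (z::complex) ^ i) * (z - 1) = z ^ N - 1"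
  by (induction N) (auto simp: algebra_simps)

lemma smult_vec_zero_cancel: "(c::'a::field) \<noteq> 0 \<Longrightarrow> v \<in> carrier_vec n \<Longrightarrow> c \<cdot>\<^sub>v v = 0\<^sub>v n \<Longrightarrow> v = 0\<^sub>v n"
proof -
  assume c: "c \<noteq> 0" and v: "v \<in> carrier_vec n" and e: "c \<cdot>\<^sub>v v = 0\<^sub>v n"
  show "v = 0\<^sub>v n"
  proof (rule eq_vecI)
    fix i assume i: "i < dim_vec (0\<^sub>v n :: 'a vec)"
    have "(c \<cdot>\<^sub>v v) $ i = 0" using e i by simp
    then show "v $ i = 0\<^sub>v n $ i" using c i v by simp
  qed (use v in auto)
qed

lemma neat_fix:
  fixes g :: "real mat"
  assumes g: "g \<in> carrier_mat n n" and ne: "neat_elem g" and x: "x \<in> carrier_vec n" and N: "N > 0"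
    and fx: "((\<lambda>v. g *\<^sub>v v) ^^ N) x = x"
  shows "g *\<^sub>v x = x"
proof -
  define gc where "gc = map_mat complex_of_real g"
  define xc where "xc = map_vec complex_of_real x"
  have gc: "gc \<in> carrier_mat n n" using g by (simp add: gc_def)
  have xc: "xc \<in> carrier_vec n" using x by (simp add: xc_def)
  have hom: "map_vec complex_of_real (g *\<^sub>v v) = gc *\<^sub>v map_vec complex_of_real v" if "v \<in> carrier_vec n" for v
    unfolding gc_def using of_real_hom.mult_mat_vec_hom[OF g that] by simp
  have pw: "map_vec complex_of_real (((\<lambda>v. g *\<^sub>v v) ^^ k) x) = ((\<lambda>v. gc *\<^sub>v v) ^^ k) xc" for k
  proof (induction k)
    case 0
    then show ?case by (simp add: xc_def)
  next
    case (Suc k)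
    have c: "((\<lambda>v. g *\<^sub>v v) ^^ k) x \<in> carrier_vec n"
      by (induction k) (use g x in auto)
    show ?case using hom[OF c] Suc by simp
  qed
  have fxc: "((\<lambda>v. gc *\<^sub>v v) ^^ N) xc = xc" using pw[of N] fx by (simp add: xc_def)
  define u where "u = gc *\<^sub>v xc - xc"
  have uc: "u \<in> carrier_vec n" using gc xc by (simp add: u_def)
  have u_ev: "ev gc [:-1, 1:] xc = u"
    using gc xc unfolding u_def by (simp add: ev_pCons ev_const) (rule eq_vecI, auto)
  define f :: "complex poly" where "f = (\<Sum>i<N. monom 1 i)"
  have polyf: "poly f z = (\<Sum>i<N. z ^ i)" for z by (simp add: f_def poly_sum poly_monom)
  have fmul: "f * [:-1, 1:] = monom 1 N - 1"
  proof -
    have "poly (f * [:-1, 1:]) = poly (monom 1 N - 1)"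
      by (rule ext) (simp add: polyf geom_poly[symmetric] poly_monom algebra_simps)
    then show ?thesis by (simp add: poly_eq_poly_eq_iff)
  qed
  have f1: "poly f 1 = of_nat N" by (simp add: polyf)
  have fnz: "f \<noteq> 0" using f1 N by auto
  have mpoly: "(monom 1 N - 1 :: complex poly) = monom 1 N + Polynomial.smult (-1) 1"
    by (metis diff_conv_add_uminus smult_1_left smult_minus_left)
  have "ev gc f u = ev gc (f * [:-1, 1:]) xc" using ev_mult[OF gc xc, of f "[:-1,1:]"] u_ev by simp
  also have "\<dots> = ev gc (monom 1 N + Polynomial.smult (-1) 1) xc" unfolding fmul mpoly ..
  also have "\<dots> = ((\<lambda>v. gc *\<^sub>v v) ^^ N) xc + (-1) \<cdot>\<^sub>v xc"
    by (simp add: ev_add[OF gc xc] ev_monom[OF gc xc] ev_const[OF gc xc])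
  also have "\<dots> = 0\<^sub>v n" unfolding fxc using xc by (intro eq_vecI) auto
  finally have evf: "ev gc f u = 0\<^sub>v n" .
  obtain rs where rs: "Polynomial.smult (lead_coeff f) (\<Prod>\<rho>\<leftarrow>rs. [:-\<rho>, 1:]) = f"
    using fundamental_theorem_algebra_factorized by blast
  have lc: "lead_coeff f \<noteq> 0" using fnz by simp
  have "lead_coeff f \<cdot>\<^sub>v ev gc (\<Prod>\<rho>\<leftarrow>rs. [:-\<rho>, 1:]) u = 0\<^sub>v n"
    using evf ev_smult[OF gc uc, of "lead_coeff f" "\<Prod>\<rho>\<leftarrow>rs. [:-\<rho>, 1:]"] rs by simp
  then have ev0: "ev gc (\<Prod>\<rho>\<leftarrow>rs. [:-\<rho>, 1:]) u = 0\<^sub>v n"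
    by (rule smult_vec_zero_cancel[OF lc ev_carrier[OF gc uc]])
  show ?thesis
  proof (rule ccontr)
    assume ne1: "g *\<^sub>v x \<noteq> x"
    have "u \<noteq> 0\<^sub>v n"
    proof
      assume "u = 0\<^sub>v n"
      then have uz: "gc *\<^sub>v xc - xc = 0\<^sub>v n" unfolding u_def .
      have "gc *\<^sub>v xc = xc"
      proof (rule eq_vecI)
        fix i assume i: "i < dim_vec xc"
        have "(gc *\<^sub>v xc - xc) $ i = 0" using uz i xc by simp
        then show "(gc *\<^sub>v xc) $ i = xc $ i" using i xc gc by simp
      qed (use gc xc in auto)
      then have "map_vec complex_of_real (g *\<^sub>v x) = map_vec complex_of_real x"
        using hom[OF x] by (simp add: xc_def)
      then have "g *\<^sub>v x = x" by (rule of_real_hom.vec_hom_inj)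
      then show False using ne1 by simp
    qed
    then obtain \<zeta> v where z: "\<zeta> \<in> set rs" and v: "v \<in> carrier_vec n" "v \<noteq> 0\<^sub>v n" "gc *\<^sub>v v = \<zeta> \<cdot>\<^sub>v v"
      using pp_eigen[OF gc order_refl _ _ _ uc _ ev0] gc by auto
    have "poly (\<Prod>\<rho>\<leftarrow>rs. [:-\<rho>, 1:]) \<zeta> = 0" by (rule linear_poly_root[OF z])
    then have pf: "poly f \<zeta> = 0" using arg_cong[OF rs, of "\<lambda>p. poly p \<zeta>"] by simp
    then have zN: "\<zeta> ^ N = 1" using geom_poly[where z=\<zeta> and N=N] polyf[of \<zeta>] by simp
    have z1: "\<zeta> \<noteq> 1" using pf f1 N by auto
    have "eigenvalue gc \<zeta>" unfolding eigenvalue_def eigenvector_def using v gc by auto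
    then have "\<zeta> \<in> mult_subgroup_gen {k. eigenvalue (map_mat complex_of_real g) k}"
      unfolding mult_subgroup_gen_def gc_def by (intro CollectI exI[of _ "[(\<zeta>, 1)]"]) auto
    then have "\<zeta> = 1" using ne zN N unfolding neat_elem_def torsion_free_set_def by blast
    then show False using z1 by simp
  qed
qed


context nf begin

lemma remb_emb: "real_embedding K \<sigma> \<Longrightarrow> field_embedding K (\<lambda>x. complex_of_real (\<sigma> x))"
  unfolding real_embedding_def .

lemma remb_add: "real_embedding K \<sigma> \<Longrightarrow> x \<in> K \<Longrightarrow> y \<in> K \<Longrightarrow> \<sigma> (x + y) = \<sigma> x + \<sigma> y"
  using emb_add[OF remb_emb, of \<sigma> x y] by (metis of_real_add of_real_eq_iff)

lemma remb_mult: "real_embedding K \<sigma> \<Longrightarrow> x \<in> K \<Longrightarrow> y \<in> K \<Longrightarrow> \<sigma> (x * y) = \<sigma> x * \<sigma> y"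
  using emb_mult[OF remb_emb, of \<sigma> x y] by (metis of_real_mult of_real_eq_iff)

lemma remb_sum: "real_embedding K \<sigma> \<Longrightarrow> (\<And>i. i \<in> I \<Longrightarrow> f i \<in> K) \<Longrightarrow> \<sigma> (sum f I) = (\<Sum>i\<in>I. \<sigma> (f i))"
  using emb_sum[OF remb_emb, of \<sigma> I f] by (metis of_real_sum of_real_eq_iff)

lemma Kvecs_carrier: "y \<in> Kvecs K n \<Longrightarrow> y \<in> carrier_vec n"
  and Kvecs_K: "y \<in> Kvecs K n \<Longrightarrow> i < n \<Longrightarrow> y $ i \<in> K"
  unfolding Kvecs_def by auto

lemma bil_K: assumes B: "B \<in> carrier_mat n n" and BK: "\<forall>i<n. \<forall>j<n. B $$ (i,j) \<in> K"
  and y: "y \<in> Kvecs K n" and u: "u \<in> Kvecs K n"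
  shows "bil B y u \<in> K"
  unfolding bil_carrier_expand[OF B Kvecs_carrier[OF y] Kvecs_carrier[OF u]]
  using BK Kvecs_K[OF y] Kvecs_K[OF u] by (intro Ksum Kmult) auto

lemma bil_sigma: assumes s: "real_embedding K \<sigma>" and B: "B \<in> carrier_mat n n" and BK: "\<forall>i<n. \<forall>j<n. B $$ (i,j) \<in> K"
  and y: "y \<in> Kvecs K n" and u: "u \<in> Kvecs K n"
  shows "\<sigma> (bil B y u) = bil (map_mat \<sigma> B) (map_vec \<sigma> y) (map_vec \<sigma> u)"
proof -
  have yc: "y \<in> carrier_vec n" and uc: "u \<in> carrier_vec n" using y u by (auto simp: Kvecs_def)
  have yK: "\<And>i. i < n \<Longrightarrow> y $ i \<in> K" and uK: "\<And>i. i < n \<Longrightarrow> u $ i \<in> K" using y u by (auto simp: Kvecs_def)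
  have inner: "(\<Sum>j<n. B $$ (i,j) * u $ j) \<in> K" if "i < n" for i
    using BK uK that by (intro Ksum Kmult) auto
  have "\<sigma> (bil B y u) = \<sigma> (\<Sum>i<n. y $ i * (\<Sum>j<n. B $$ (i,j) * u $ j))"
    unfolding bil_carrier_expand[OF B yc uc] ..
  also have "\<dots> = (\<Sum>i<n. \<sigma> (y $ i) * (\<Sum>j<n. \<sigma> (B $$ (i,j)) * \<sigma> (u $ j)))"
  proof -
    have "\<sigma> (\<Sum>i<n. y $ i * (\<Sum>j<n. B $$ (i,j) * u $ j)) = (\<Sum>i<n. \<sigma> (y $ i * (\<Sum>j<n. B $$ (i,j) * u $ j)))"
      by (rule remb_sum[OF s]) (use yK inner in auto)
    also have "\<dots> = (\<Sum>i<n. \<sigma> (y $ i) * (\<Sum>j<n. \<sigma> (B $$ (i,j)) * \<sigma> (u $ j)))"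
    proof (intro sum.cong refl)
      fix i assume "i \<in> {..<n}"
      then have i: "i < n" by simp
      have "\<sigma> (y $ i * (\<Sum>j<n. B $$ (i,j) * u $ j)) = \<sigma> (y $ i) * \<sigma> (\<Sum>j<n. B $$ (i,j) * u $ j)"
        by (rule remb_mult[OF s yK[OF i] inner[OF i]])
      also have "\<sigma> (\<Sum>j<n. B $$ (i,j) * u $ j) = (\<Sum>j<n. \<sigma> (B $$ (i,j) * u $ j))"
        by (rule remb_sum[OF s]) (use BK uK i in auto)
      also have "\<dots> = (\<Sum>j<n. \<sigma> (B $$ (i,j)) * \<sigma> (u $ j))"
        by (intro sum.cong refl remb_mult[OF s]) (use BK uK i in auto)
      finally show "\<sigma> (y $ i * (\<Sum>j<n. B $$ (i,j) * u $ j)) = \<sigma> (y $ i) * (\<Sum>j<n. \<sigma> (B $$ (i,j)) * \<sigma> (u $ j))" .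
    qed
    finally show ?thesis .
  qed
  also have "\<dots> = bil (map_mat \<sigma> B) (map_vec \<sigma> y) (map_vec \<sigma> u)"
    by (subst bil_carrier_expand[of _ n]) (use B yc uc in auto)
  finally show ?thesis .
qed

lemma tau_real: "field_embedding K \<tau> \<Longrightarrow> x \<in> K \<Longrightarrow> \<tau> x = complex_of_real (Re (\<tau> x))"
proof -
  assume t: "field_embedding K \<tau>" and x: "x \<in> K"
  have "\<tau> x \<in> \<real>" using tr t x unfolding totally_real_def by blast
  then show ?thesis by (metis Reals_cases Re_complex_of_real)
qed

lemma tau_remb: assumes t: "field_embedding K \<tau>" shows "real_embedding K (\<lambda>x. Re (\<tau> x))"
  unfolding real_embedding_def field_embedding_def
proof (intro conjI ballI)
  show "complex_of_real (Re (\<tau> 1)) = 1" using emb_1[OF t] by simp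
  fix x y assume x: "x \<in> K" and y: "y \<in> K"
  show "complex_of_real (Re (\<tau> (x + y))) = complex_of_real (Re (\<tau> x)) + complex_of_real (Re (\<tau> y))"
    using tau_real[OF t, of "x + y"] tau_real[OF t x] tau_real[OF t y] emb_add[OF t x y] x y by simp
  show "complex_of_real (Re (\<tau> (x * y))) = complex_of_real (Re (\<tau> x)) * complex_of_real (Re (\<tau> y))"
    using tau_real[OF t, of "x * y"] tau_real[OF t x] tau_real[OF t y] emb_mult[OF t x y] x y by simp
qed

lemma adm_facts: assumes "admissible_form K n B"
  shows "B \<in> carrier_mat n n" "transpose_mat B = B" "\<forall>i<n. \<forall>j<n. B $$ (i,j) \<in> K"
    "\<And>\<sigma>. real_embedding K \<sigma> \<Longrightarrow> (\<exists>x\<in>K. \<sigma> x \<noteq> x) \<Longrightarrow> (\<forall>x\<in>carrier_vec n. x \<noteq> 0\<^sub>v n \<longrightarrow> bil (map_mat \<sigma> B) x x > 0)"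
  using assms unfolding admissible_form_def by blast+

lemma sq_le_abs: "(a::real)^2 \<le> c * c \<Longrightarrow> \<bar>a\<bar> \<le> \<bar>c\<bar>"
  by (metis abs_le_square_iff power2_eq_square)

lemma bound_tau:
  assumes adm: "admissible_form K n B"
    and XN: "X \<subseteq> carrier_vec n" and Xadd: "\<And>u v. u \<in> X \<Longrightarrow> v \<in> X \<Longrightarrow> u + v \<in> X"
    and Xsc: "\<And>c v. v \<in> X \<Longrightarrow> c \<cdot>\<^sub>v v \<in> X"
    and pd: "\<forall>x\<in>X. x \<noteq> 0\<^sub>v n \<longrightarrow> bil B x x > 0"
    and yX: "y \<in> X" and yK: "y \<in> Kvecs K n" and uX: "u \<in> X" and uK: "u \<in> Kvecs K n"
    and yy: "bil B y y = c" and uu: "bil B u u = c"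
    and t: "field_embedding K \<tau>"
  shows "cmod (\<tau> (bil B y u)) \<le> cmod (\<tau> c)"
proof -
  note Bf = adm_facts[OF adm]
  define \<sigma> where "\<sigma> x = Re (\<tau> x)" for x
  have s: "real_embedding K \<sigma>" unfolding \<sigma>_def by (rule tau_remb[OF t])
  define a where "a = bil B y u"
  have aK: "a \<in> K" unfolding a_def by (rule bil_K[OF Bf(1) Bf(3) yK uK])
  have cK: "c \<in> K" using bil_K[OF Bf(1) Bf(3) yK yK] yy by simp
  have ta: "cmod (\<tau> a) = \<bar>\<sigma> a\<bar>" using tau_real[OF t aK] unfolding \<sigma>_def by (metis norm_of_real)
  have tc: "cmod (\<tau> c) = \<bar>\<sigma> c\<bar>" using tau_real[OF t cK] unfolding \<sigma>_def by (metis norm_of_real)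
  have yc: "y \<in> carrier_vec n" and uc: "u \<in> carrier_vec n" using yK uK by (auto simp: Kvecs_def)
  show ?thesis
  proof (cases "\<exists>x\<in>K. \<sigma> x \<noteq> x")
    case True
    define B' where "B' = map_mat \<sigma> B"
    have B'c: "B' \<in> carrier_mat n n" using Bf(1) by (simp add: B'_def)
    have B's: "transpose_mat B' = B'"
    proof (rule eq_matI)
      fix i j assume "i < dim_row B'" "j < dim_col B'"
      then have i: "i < n" and j: "j < n" using B'c by auto
      have "B $$ (j, i) = B $$ (i, j)" using arg_cong[OF Bf(2), of "\<lambda>M. M $$ (i,j)"] i j Bf(1) by simp
      then show "transpose_mat B' $$ (i, j) = B' $$ (i, j)" using i j Bf(1) by (simp add: B'_def)
    qed (use B'c in auto)
    have pos: "\<forall>x\<in>carrier_vec n. x \<noteq> 0\<^sub>v n \<longrightarrow> bil B' x x > 0" unfolding B'_def by (rule Bf(4)[OF s True])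
    have psd: "bil B' v v \<ge> 0" if "v \<in> carrier_vec n" for v
      using pos that B'c by (cases "v = 0\<^sub>v n") (auto intro: less_imp_le)
    have cs: "(bil B' (map_vec \<sigma> y) (map_vec \<sigma> u))^2 \<le> bil B' (map_vec \<sigma> y) (map_vec \<sigma> y) * bil B' (map_vec \<sigma> u) (map_vec \<sigma> u)"
      by (rule cauchy_schwarz_bil[OF B'c B's order_refl]) (use psd yc uc in auto)
    have e1: "bil B' (map_vec \<sigma> y) (map_vec \<sigma> u) = \<sigma> a" unfolding B'_def a_def by (rule bil_sigma[OF s Bf(1) Bf(3) yK uK, symmetric])
    have e2: "bil B' (map_vec \<sigma> y) (map_vec \<sigma> y) = \<sigma> c" unfolding B'_def using bil_sigma[OF s Bf(1) Bf(3) yK yK] yy by simp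
    have e3: "bil B' (map_vec \<sigma> u) (map_vec \<sigma> u) = \<sigma> c" unfolding B'_def using bil_sigma[OF s Bf(1) Bf(3) uK uK] uu by simp
    have "(\<sigma> a)^2 \<le> \<sigma> c * \<sigma> c" using cs e1 e2 e3 by simp
    then show ?thesis using ta tc sq_le_abs by (simp add: a_def)
  next
    case False
    then have sa: "\<sigma> a = a" and sc: "\<sigma> c = c" using aK cK by auto
    have psd: "bil B v v \<ge> 0" if "v \<in> X" for v
      using pd that Bf(1) XN by (cases "v = 0\<^sub>v n") (auto intro: less_imp_le)
    have "a^2 \<le> bil B y y * bil B u u" unfolding a_def
      by (rule cauchy_schwarz_bil[OF Bf(1) Bf(2) XN Xadd Xsc psd yX uX])
    then have "a^2 \<le> c * c" using yy uu by simp
    then show ?thesis using ta tc sa sc sq_le_abs by (simp add: a_def)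
  qed
qed

lemma vec_diff_zero_eq: "(y :: 'a::ab_group_add vec) \<in> carrier_vec n \<Longrightarrow> y' \<in> carrier_vec n \<Longrightarrow> y - y' = 0\<^sub>v n \<Longrightarrow> y = y'"
proof -
  assume y: "y \<in> carrier_vec n" and y': "y' \<in> carrier_vec n" and e: "y - y' = 0\<^sub>v n"
  show "y = y'"
  proof (rule eq_vecI)
    fix i assume i: "i < dim_vec y'"
    have "(y - y') $ i = 0" using e i y' by simp
    then show "y $ i = y' $ i" using i y y' by simp
  qed (use y y' in auto)
qed

lemma orbit_finite:
  assumes adm: "admissible_form K n B"
    and XN: "X \<subseteq> carrier_vec n" and Xadd: "\<And>u v. u \<in> X \<Longrightarrow> v \<in> X \<Longrightarrow> u + v \<in> X"
    and Xsc: "\<And>c v. v \<in> X \<Longrightarrow> c \<cdot>\<^sub>v v \<in> X" and Xdiff: "\<And>u v. u \<in> X \<Longrightarrow> v \<in> X \<Longrightarrow> u - v \<in> X"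
    and pd: "\<forall>x\<in>X. x \<noteq> 0\<^sub>v n \<longrightarrow> bil B x x > 0"
    and g: "g \<in> carrier_mat n n" and iso: "transpose_mat g * B * g = B"
    and gL: "\<And>v. v \<in> L \<Longrightarrow> g *\<^sub>v v \<in> L" and gX: "\<And>v. v \<in> X \<Longrightarrow> g *\<^sub>v v \<in> X"
    and LK: "L \<subseteq> Kvecs K n" and Lint: "\<forall>x\<in>L. \<forall>y\<in>L. bil B x y \<in> ring_of_integers K"
    and wL: "w \<in> L" and wX: "w \<in> X"
  shows "finite (range (\<lambda>k. ((\<lambda>v. g *\<^sub>v v) ^^ k) w))"
proof -
  note Bf = adm_facts[OF adm]
  define f where "f = (\<lambda>v. g *\<^sub>v v)"
  define Ob where "Ob = range (\<lambda>k. (f ^^ k) w)"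
  define c where "c = bil B w w"
  have orb: "(f ^^ k) w \<in> L \<and> (f ^^ k) w \<in> X \<and> bil B ((f ^^ k) w) ((f ^^ k) w) = c" for k
  proof (induction k)
    case 0
    then show ?case using wL wX by (simp add: c_def)
  next
    case (Suc k)
    have yc: "(f ^^ k) w \<in> carrier_vec n" using Suc XN by auto
    have "bil B (g *\<^sub>v (f ^^ k) w) (g *\<^sub>v (f ^^ k) w) = bil B ((f ^^ k) w) ((f ^^ k) w)"
      by (rule bil_isometry[OF Bf(1) g iso yc yc])
    then show ?case using Suc gL gX by (simp add: f_def)
  qed
  have ObL: "Ob \<subseteq> L" and ObX: "Ob \<subseteq> X" and Obc: "\<And>y. y \<in> Ob \<Longrightarrow> bil B y y = c"
    using orb unfolding Ob_def by auto
  have ObN: "Ob \<subseteq> carrier_vec n" using ObX XN by auto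
  have cK: "c \<in> K" using Lint wL unfolding c_def ring_of_integers_def by blast
  obtain R where R: "\<forall>\<tau>. field_embedding K \<tau> \<longrightarrow> cmod (\<tau> c) \<le> R" using emb_bounded[OF cK] by blast
  define F where "F = {a \<in> K. algebraic_int a \<and> (\<forall>\<tau>. field_embedding K \<tau> \<longrightarrow> cmod (\<tau> a) \<le> R)}"
  have finF: "finite F" unfolding F_def by (rule finite_bounded)
  obtain U where U: "finite U" "U \<subseteq> Ob" "\<forall>z\<in>carrier_vec n. (\<forall>u\<in>U. bil B z u = 0) \<longrightarrow> (\<forall>y\<in>Ob. bil B z y = 0)"
    using finite_test_set[OF ObN Bf(1)] by blast
  define Psi where "Psi y = restrict (\<lambda>u. bil B y u) U" for y
  have img: "Psi ` Ob \<subseteq> PiE U (\<lambda>_. F)"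
  proof (rule image_subsetI)
    fix y assume y: "y \<in> Ob"
    show "Psi y \<in> PiE U (\<lambda>_. F)" unfolding Psi_def
    proof (subst restrict_PiE_iff, intro ballI)
      fix u assume u: "u \<in> U"
      then have uO: "u \<in> Ob" using U(2) by auto
      have "bil B y u \<in> ring_of_integers K" using Lint y uO ObL by blast
      then have a: "bil B y u \<in> K" "algebraic_int (bil B y u)" unfolding ring_of_integers_def by auto
      have "cmod (\<tau> (bil B y u)) \<le> R" if t: "field_embedding K \<tau>" for \<tau>
      proof -
        have "cmod (\<tau> (bil B y u)) \<le> cmod (\<tau> c)"
          by (rule bound_tau[OF adm XN Xadd Xsc pd _ _ _ _ Obc[OF y] Obc[OF uO] t]) (use y uO ObX ObL LK in auto)
        then show ?thesis using R t by force
      qed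
      then show "bil B y u \<in> F" unfolding F_def using a by auto
    qed
  qed
  have inj: "inj_on Psi Ob"
  proof (rule inj_onI)
    fix y y' assume y: "y \<in> Ob" and y': "y' \<in> Ob" and e: "Psi y = Psi y'"
    have yc: "y \<in> carrier_vec n" and y'c: "y' \<in> carrier_vec n" using y y' ObN by auto
    define z where "z = y - y'"
    have zc: "z \<in> carrier_vec n" using yc y'c by (simp add: z_def)
    have zX: "z \<in> X" unfolding z_def using Xdiff y y' ObX by auto
    have "bil B z u = 0" if u: "u \<in> U" for u
    proof -
      have "bil B y u = bil B y' u" using fun_cong[OF e, of u] u by (simp add: Psi_def)
      moreover have "u \<in> carrier_vec n" using u U(2) ObN by auto
      ultimately show ?thesis unfolding z_def using bil_minus_left[OF Bf(1) yc y'c] by simp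
    qed
    then have "\<forall>t\<in>Ob. bil B z t = 0" using U(3) zc by blast
    then have "bil B z z = 0"
      using y y' unfolding z_def[symmetric] by (simp add: z_def bil_minus_right[OF Bf(1) zc[unfolded z_def] yc y'c])
    then have "z = 0\<^sub>v n" using pd zX by force
    then show "y = y'" using vec_diff_zero_eq[OF yc y'c] by (simp add: z_def)
  qed
  have "finite (Psi ` Ob)" by (rule finite_subset[OF img]) (simp add: finite_PiE U(1) finF)
  then have "finite Ob" using finite_imageD inj by blast
  then show ?thesis unfolding Ob_def f_def .
qed

lemma common_D: "(\<forall>j<(m::nat). c j \<in> K) \<Longrightarrow> \<exists>D::int. D > 0 \<and> (\<forall>j<m. algebraic_int (of_int D * c j))"
proof (induction m)
  case 0
  then show ?case by (intro exI[of _ 1]) auto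
next
  case (Suc m)
  then obtain D :: int where D: "D > 0" "\<forall>j<m. algebraic_int (of_int D * c j)" by auto
  obtain D' :: int where D': "D' > 0" "algebraic_int (of_int D' * c m)" using denom_exists Suc.prems by blast
  have "algebraic_int (of_int (D * D') * c j)" if j: "j < Suc m" for j
  proof (cases "j < m")
    case True
    have "of_int (D * D') * c j = of_int D' * (of_int D * c j)" by simp
    moreover have "algebraic_int (of_int D' :: real)" by (rule int_imp_algebraic_int) simp
    ultimately show ?thesis using alg_int_mult_real D(2) True by metis
  next
    case False
    then have jm: "j = m" using j by simp
    have "of_int (D * D') * c j = of_int D * (of_int D' * c m)" using jm by simp
    moreover have "algebraic_int (of_int D :: real)" by (rule int_imp_algebraic_int) simp
    ultimately show ?thesis using alg_int_mult_real D'(2) by metis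
  qed
  then show ?case using D(1) D'(1) by (intro exI[of _ "D * D'"]) auto
qed

end

lemma funpow_carrier: "g \<in> carrier_mat n n \<Longrightarrow> w \<in> carrier_vec n \<Longrightarrow> ((\<lambda>v. g *\<^sub>v v) ^^ k) w \<in> carrier_vec n"
  by (induction k) auto

lemma period:
  assumes g: "g \<in> carrier_mat n n"
    and inj: "\<And>u v. u \<in> carrier_vec n \<Longrightarrow> v \<in> carrier_vec n \<Longrightarrow> g *\<^sub>v u = g *\<^sub>v v \<Longrightarrow> u = v"
    and w: "w \<in> carrier_vec n" and fin: "finite (range (\<lambda>k. ((\<lambda>v. g *\<^sub>v v) ^^ k) w))"
  shows "\<exists>N>0. ((\<lambda>v. g *\<^sub>v v) ^^ N) w = w"
proof -
  define f where "f = (\<lambda>v. g *\<^sub>v v)"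
  have cancel: "u \<in> carrier_vec n \<Longrightarrow> v \<in> carrier_vec n \<Longrightarrow> (f ^^ i) u = (f ^^ i) v \<Longrightarrow> u = v" for i u v
  proof (induction i)
    case 0
    then show ?case by simp
  next
    case (Suc i)
    have "(f ^^ i) u \<in> carrier_vec n" "(f ^^ i) v \<in> carrier_vec n"
      using funpow_carrier[OF g] Suc.prems unfolding f_def by auto
    then have "(f ^^ i) u = (f ^^ i) v" using inj Suc.prems(3) by (simp add: f_def)
    then show ?case using Suc by blast
  qed
  have "\<not> inj (\<lambda>k. (f ^^ k) w)"
  proof
    assume "inj (\<lambda>k. (f ^^ k) w)"
    then have "finite (UNIV :: nat set)" using fin finite_imageD unfolding f_def by blast
    then show False by simp
  qed
  then obtain i j where ij: "i \<noteq> j" "(f ^^ i) w = (f ^^ j) w" unfolding inj_def by blast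
  have "\<exists>a b. a < b \<and> (f ^^ a) w = (f ^^ b) w"
  proof (cases "i < j")
    case True
    then show ?thesis using ij by blast
  next
    case False
    then have "j < i" using ij(1) by simp
    then show ?thesis using ij(2) by metis
  qed
  then obtain a b where ab: "a < b" "(f ^^ a) w = (f ^^ b) w" by blast
  have "(f ^^ b) w = (f ^^ a) ((f ^^ (b - a)) w)"
    using ab(1) by (metis funpow_add le_add_diff_inverse less_imp_le o_apply)
  then have "w = (f ^^ (b - a)) w"
    using cancel[of w "(f ^^ (b - a)) w" a] ab(2) w funpow_carrier[OF g w] unfolding f_def by metis
  then show ?thesis using ab(1) unfolding f_def by (intro exI[of _ "b - a"]) auto
qed


lemma smult_vec_inj: "(r::real) \<noteq> 0 \<Longrightarrow> a \<in> carrier_vec n \<Longrightarrow> b \<in> carrier_vec n \<Longrightarrow> r \<cdot>\<^sub>v a = r \<cdot>\<^sub>v b \<Longrightarrow> a = b"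
proof -
  assume r: "r \<noteq> 0" and a: "a \<in> carrier_vec n" and b: "b \<in> carrier_vec n" and e: "r \<cdot>\<^sub>v a = r \<cdot>\<^sub>v b"
  show "a = b"
  proof (rule eq_vecI)
    fix i assume i: "i < dim_vec b"
    have "(r \<cdot>\<^sub>v a) $ i = (r \<cdot>\<^sub>v b) $ i" using e by simp
    then show "a $ i = b $ i" using i a b r by simp
  qed (use a b in auto)
qed

context nf begin

lemma main_fix:
  assumes adm: "admissible_form K n B" and il: "integral_lattice K n B L"
    and sg: "is_subgroup_of n \<Gamma> (Phi K n B L)" and ne: "neat \<Gamma>" and ks: "K_subspace K n Xk"
    and pd: "\<forall>x\<in>completion n Xk. x \<noteq> 0\<^sub>v n \<longrightarrow> bil B x x > 0"
    and gG: "g \<in> \<Gamma>" and gX: "(\<lambda>v. g *\<^sub>v v) ` completion n Xk = completion n Xk"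
  shows "\<forall>v\<in>completion n Xk. g *\<^sub>v v = v"
proof -
  note Bf = adm_facts[OF adm]
  define X where "X = completion n Xk"
  have XkK: "Xk \<subseteq> Kvecs K n" using ks unfolding K_subspace_def by blast
  have XkN: "Xk \<subseteq> carrier_vec n" using XkK unfolding Kvecs_def by blast
  have XN: "X \<subseteq> carrier_vec n" unfolding X_def completion_def by (rule span_with_carrier)
  have Xadd: "\<And>u v. u \<in> X \<Longrightarrow> v \<in> X \<Longrightarrow> u + v \<in> X" unfolding X_def completion_def by (rule span_with_add)
  have Xsc: "\<And>c v. v \<in> X \<Longrightarrow> c \<cdot>\<^sub>v v \<in> X" unfolding X_def completion_def by (rule span_with_UNIV_smult)
  have Xdiff: "\<And>u v. u \<in> X \<Longrightarrow> v \<in> X \<Longrightarrow> u - v \<in> X" unfolding X_def completion_def by (rule span_with_UNIV_diff[OF XkN])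
  have XkX: "Xk \<subseteq> X" unfolding X_def completion_def using span_with_UNIV_base[OF XkN] by blast
  have pdX: "\<forall>x\<in>X. x \<noteq> 0\<^sub>v n \<longrightarrow> bil B x x > 0" using pd unfolding X_def .
  have gPhi: "g \<in> Phi K n B L" using sg gG unfolding is_subgroup_of_def by blast
  have g: "g \<in> carrier_mat n n" and iso: "transpose_mat g * B * g = B" and gLe: "(\<lambda>v. g *\<^sub>v v) ` L = L"
    using gPhi unfolding Phi_def by auto
  have gL: "\<And>v. v \<in> L \<Longrightarrow> g *\<^sub>v v \<in> L" using gLe by blast
  have gXi: "\<And>v. v \<in> X \<Longrightarrow> g *\<^sub>v v \<in> X" using gX unfolding X_def by blast
  obtain h where h: "h \<in> \<Gamma>" "g * h = 1\<^sub>m n" using sg gG unfolding is_subgroup_of_def by blast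
  have hc: "h \<in> carrier_mat n n" using h(1) sg unfolding is_subgroup_of_def Phi_def by blast
  have hg: "h * g = 1\<^sub>m n" by (rule mat_mult_left_right_inverse[OF g hc h(2)])
  have ginj: "u = v" if u: "u \<in> carrier_vec n" and v: "v \<in> carrier_vec n" and e: "g *\<^sub>v u = g *\<^sub>v v" for u v
  proof -
    have "(h * g) *\<^sub>v u = h *\<^sub>v (g *\<^sub>v u)" by (rule assoc_mult_mat_vec[OF hc g u])
    also have "\<dots> = h *\<^sub>v (g *\<^sub>v v)" using e by simp
    also have "\<dots> = (h * g) *\<^sub>v v" by (rule assoc_mult_mat_vec[OF hc g v, symmetric])
    finally show ?thesis using hg u v by simp
  qed
  obtain m0 :: nat and gs where gsK: "\<forall>j<m0. gs j \<in> Kvecs K n"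
    and Ldef: "L = span_with (ring_of_integers K) n (gs ` {..<m0})"
    and Kdef: "Kvecs K n = span_with K n (gs ` {..<m0})"
    and Lint: "\<forall>x\<in>L. \<forall>y\<in>L. bil B x y \<in> ring_of_integers K"
    using il unfolding integral_lattice_def by blast
  have LK: "L \<subseteq> Kvecs K n"
  proof
    fix y assume "y \<in> L"
    then obtain m c xs where y: "y = lincomb_vec n m c xs" "\<forall>j<m. c j \<in> ring_of_integers K" "\<forall>j<m. xs j \<in> gs ` {..<m0}"
      unfolding Ldef span_with_def by blast
    have cK: "\<forall>j<m. c j \<in> K" using y(2) unfolding ring_of_integers_def by auto
    have xK: "\<forall>j<m. xs j \<in> Kvecs K n" using y(3) gsK by auto
    show "y \<in> Kvecs K n" unfolding Kvecs_def y(1)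
      using cK xK by (auto simp: lincomb_index Kvecs_K intro!: Ksum Kmult)
  qed
  have neg: "neat_elem g" using ne gG unfolding neat_def by blast
  have fixXk: "g *\<^sub>v x = x" if x: "x \<in> Xk" for x
  proof -
    have xK: "x \<in> Kvecs K n" using x XkK by blast
    have xc: "x \<in> carrier_vec n" using x XkN by blast
    obtain m c xs where xl: "x = lincomb_vec n m c xs" "\<forall>j<m. c j \<in> K" "\<forall>j<m. xs j \<in> gs ` {..<m0}"
      using xK unfolding Kdef span_with_def by blast
    obtain D :: int where D: "D > 0" "\<forall>j<m. algebraic_int (of_int D * c j)"
      using common_D[OF xl(2)] by blast
    define w where "w = real_of_int D \<cdot>\<^sub>v x"
    have wc: "w \<in> carrier_vec n" using xc by (simp add: w_def)
    have wL: "w \<in> L"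
    proof -
      have "w = lincomb_vec n m (\<lambda>j. of_int D * c j) xs" unfolding w_def xl(1) lincomb_smult ..
      moreover have "\<forall>j<m. of_int D * c j \<in> ring_of_integers K"
        using D(2) xl(2) unfolding ring_of_integers_def by auto
      ultimately show ?thesis unfolding Ldef span_with_def using xl(3) by blast
    qed
    have wX: "w \<in> X" unfolding w_def by (rule Xsc) (use x XkX in auto)
    have fin: "finite (range (\<lambda>k. ((\<lambda>v. g *\<^sub>v v) ^^ k) w))"
      by (rule orbit_finite[OF adm XN Xadd Xsc Xdiff pdX g iso gL gXi LK Lint wL wX])
    obtain N where N: "N > 0" "((\<lambda>v. g *\<^sub>v v) ^^ N) w = w"
      using period[OF g ginj wc fin] by blast
    have sc: "((\<lambda>v. g *\<^sub>v v) ^^ k) (r \<cdot>\<^sub>v v) = r \<cdot>\<^sub>v ((\<lambda>v. g *\<^sub>v v) ^^ k) v" if "v \<in> carrier_vec n" for k r v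
    proof (induction k)
      case 0
      then show ?case by simp
    next
      case (Suc k)
      have "((\<lambda>v. g *\<^sub>v v) ^^ k) v \<in> carrier_vec n" by (rule funpow_carrier[OF g that])
      then show ?case using Suc by (simp add: mult_mat_vec_smult[OF g])
    qed
    have "real_of_int D \<cdot>\<^sub>v ((\<lambda>v. g *\<^sub>v v) ^^ N) x = real_of_int D \<cdot>\<^sub>v x"
      using N(2) sc[OF xc] unfolding w_def by simp
    moreover have r: "real_of_int D \<noteq> 0" using D(1) by simp
    ultimately have "((\<lambda>v. g *\<^sub>v v) ^^ N) x = x"
      using smult_vec_inj[OF r funpow_carrier[OF g xc] xc] by blast
    then show "g *\<^sub>v x = x" by (rule neat_fix[OF g neg xc N(1)])
  qed
  show ?thesis
  proof
    fix v assume "v \<in> completion n Xk"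
    then obtain m c xs where v: "v = lincomb_vec n m c xs" "\<forall>j<m. xs j \<in> Xk"
      unfolding completion_def span_with_def by blast
    have "g *\<^sub>v v = lincomb_vec n m c (\<lambda>j. g *\<^sub>v xs j)"
      unfolding v(1) by (rule lincomb_mat[OF g]) (use v(2) XkN in auto)
    also have "\<dots> = v" unfolding v(1) using v(2) fixXk by (intro eq_vecI) (auto simp: lincomb_vec_def)
    finally show "g *\<^sub>v v = v" .
  qed
qed

end

theorem lemma4p4:
  fixes K :: "real set" and n :: nat and B :: "real mat"
    and L :: "real vec set" and \<Gamma> :: "real mat set" and Xk :: "real vec set"
  assumes "totally_real K"
    and "admissible_form K n B"
    and "integral_lattice K n B L"
    and "is_subgroup_of n \<Gamma> (Phi K n B L)"
    and "neat \<Gamma>"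
    and "K_subspace K n Xk"
    and "\<forall>x\<in>completion n Xk. x \<noteq> 0\<^sub>v n \<longrightarrow> bil B x x > 0"
  shows "stab \<Gamma> (completion n Xk) = pointwise_stab \<Gamma> (completion n Xk)"
proof -
  interpret nf K by unfold_locales (rule assms(1))
  show ?thesis
  proof
    show "stab \<Gamma> (completion n Xk) \<subseteq> pointwise_stab \<Gamma> (completion n Xk)"
      unfolding stab_def pointwise_stab_def
      using main_fix[OF assms(2-7)] by blast
    show "pointwise_stab \<Gamma> (completion n Xk) \<subseteq> stab \<Gamma> (completion n Xk)"
    proof
      fix g assume "g \<in> pointwise_stab \<Gamma> (completion n Xk)"
      then have g: "g \<in> \<Gamma>" "\<forall>v\<in>completion n Xk. g *\<^sub>v v = v" unfolding pointwise_stab_def by auto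
      have "(\<lambda>v. g *\<^sub>v v) ` completion n Xk = (\<lambda>v. v) ` completion n Xk"
        by (rule image_cong) (use g in auto)
      then show "g \<in> stab \<Gamma> (completion n Xk)" unfolding stab_def using g by simp
    qed
  qed
qed


end
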